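(* Consider Algorithm GEN with parameter $t_0$ on an instance satisfying the standing assumption, with an edge labeling as in the context. For each edge $(i,u)$, let $q_{i,u}(t)$ be the probability that $(i,u)$ has been matched by time $t$. Then for every $t\in[0,1]$: - for every first-class-labeled edge $(i,u)$, we have $q_{i,u}(t)/x_{iu}=q_1(t)/(1-\ln 2)$; - for every second-class-labeled edge $(i,u)$, we have $q_{i,u}(t)/x_{iu}=q_2(t)/\ln 2$.
   Context: **Model.** Poisson arrival model. Each online type $i$ independently arrives according to a Poisson process of rate $\lambda_i$ on $[0,1]$. On arrival, a vertex is immediately and irrevocably matched to an unmatched offline neighbor or discarded. Each offline vertex is matched at most once. The instance is a bipartite graph $(I,J,E)$ with rates $\lambda_i>0$. **Standing assumption.** There are values $x_{ij}\ge0$ (an optimal Jaillet–Lu LP solution) with $\sum_i x_{ij}=1$ for all $j$, and each type is one of two kinds: - first-class: one neighbor $j$, with $x_{ij}=\lambda_i$; - second-class: two neighbors $j_1,j_2$, with $x_{ij_1}=x_{ij_2}=\lambda_i/2$. **Labeling.** Each edge is labeled first-class or second-class. Edges of first-class types are labeled first-class. For every $j$, the first-class-labeled edges at $j$ have total $x$-value $1-\ln2$. **Reference process.** $H$ has offline vertices $a,b$; a type of rate $2\ln2$ adjacent to both; and types of rate $1-\ln2$ adjacent only to $a$, resp. only to $b$. Algorithm RES with parameter $t_0$ works as follows: - single-neighbor arrivals are matched if their neighbor is unmatched; - a two-neighbor arrival at time $t>t_0$ with an unmatched neighbor is matched to a uniformly random unmatched neighbor. On $H$ under RES: - $f(t)$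 is the probability that a given offline vertex is matched by time $t$; - $g(t)$ is the probability that both are, and $\bar g=1-g$; - $q_1(t)$ is the probability that a particular single-neighbor edge has been matched by time $t$; - $q_2(t)$ is the same for a particular edge of the two-neighbor type. **Algorithm GEN (parameter $t_0$).** Under GEN, $g_{u,v}(t)$ is the probability that both $u$ and $v$ are matched by time $t$, and $\bar g_{u,v}=1-g_{u,v}$. Edges are used only if their offline endpoint is unmatched. - A first-class arrival is matched to its neighbor if possible. - A second-class arrival of type $i$ with neighbors $u,v$ chooses at most one edge, with disjoint probabilities: - each first-class-labeled edge $(i,u)$ with probability $1/2$; - if the arrival time is $t>t_0$, each second-class-labeled edge $(i,u)$ with probability $\bar g(t)/(2\bar g_{u,v}(t))$ if $v$ is unmatched, or $\bar g(t)/\bar g_{u,v}(t)$ if $v$ is matched. *)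

theory Defs
  imports "HOL-Analysis.Analysis"
begin

(* A state records, for each offline vertex u, the online type that matched it (Some i),
   or None if u is still unmatched. *)
type_synonym ('i,'j) mstate = "'j \<Rightarrow> 'i option"

definition nbrs :: "('i \<times> 'j) set \<Rightarrow> 'i \<Rightarrow> 'j set" where
  "nbrs E i = {j. (i, j) \<in> E}"

(* Net probability flow into state \<sigma> at time s, where r s \<sigma> i u is the rate at which
   edge (i,u) gets matched in state \<sigma> (u unmatched): arrival rate of type i times the
   probability that an arrival of type i chooses edge (i,u). *)
definition flow ::
  "('i \<times> 'j::finite) set \<Rightarrow> (real \<Rightarrow> ('i,'j) mstate \<Rightarrow> 'i \<Rightarrow> 'j \<Rightarrow> real)
   \<Rightarrow> (real \<Rightarrow> ('i,'j) mstate \<Rightarrow> real) \<Rightarrow> real \<Rightarrow> ('i,'j) mstate \<Rightarrow> real" where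
  "flow E r p s \<sigma> =
     (\<Sum>u\<in>{u. \<sigma> u \<noteq> None}.
        if (the (\<sigma> u), u) \<in> E
        then p s (\<sigma>(u := None)) * r s (\<sigma>(u := None)) (the (\<sigma> u)) u else 0)
     - p s \<sigma> * (\<Sum>e\<in>{e\<in>E. \<sigma> (snd e) = None}. r s \<sigma> (fst e) (snd e))"

(* p t \<sigma> is the law (at time t) of the state of the continuous-time Markov chain driven by
   independent Poisson arrivals, characterised by the Kolmogorov forward equations in
   integral form, starting from the empty matching. *)
definition matched_law ::
  "('i \<times> 'j::finite) set \<Rightarrow> (real \<Rightarrow> ('i,'j) mstate \<Rightarrow> 'i \<Rightarrow> 'j \<Rightarrow> real)
   \<Rightarrow> (real \<Rightarrow> ('i,'j) mstate \<Rightarrow> real) \<Rightarrow> bool" where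
  "matched_law E r p \<longleftrightarrow>
     (\<forall>\<sigma>. p 0 \<sigma> = (if \<sigma> = (\<lambda>_. None) then 1 else 0)) \<and>
     (\<forall>t\<in>{0..1}. \<forall>\<sigma>. ((\<lambda>s. flow E r p s \<sigma>) has_integral (p t \<sigma> - p 0 \<sigma>)) {0..t})"

definition qedge :: "(real \<Rightarrow> ('i,'j::finite) mstate \<Rightarrow> real) \<Rightarrow> 'i \<Rightarrow> 'j \<Rightarrow> real \<Rightarrow> real" where
  "qedge p i u t = (\<Sum>\<sigma>\<in>{\<sigma>. \<sigma> u = Some i}. p t \<sigma>)"

definition gboth :: "(real \<Rightarrow> ('i::finite,'j::finite) mstate \<Rightarrow> real) \<Rightarrow> 'j \<Rightarrow> 'j \<Rightarrow> real \<Rightarrow> real" where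
  "gboth p u v t = (\<Sum>\<sigma>\<in>{\<sigma>. \<sigma> u \<noteq> None \<and> \<sigma> v \<noteq> None}. p t \<sigma>)"

definition res_rate :: "('i \<times> 'j) set \<Rightarrow> ('i \<Rightarrow> real) \<Rightarrow> real
    \<Rightarrow> real \<Rightarrow> ('i,'j) mstate \<Rightarrow> 'i \<Rightarrow> 'j \<Rightarrow> real" where
  "res_rate E lam t0 s \<sigma> i u =
     (if card (nbrs E i) = 1 then lam i
      else if t0 < s then lam i / real (card {v\<in>nbrs E i. \<sigma> v = None})
      else 0)"

definition other :: "('i \<times> 'j) set \<Rightarrow> 'i \<Rightarrow> 'j \<Rightarrow> 'j" where
  "other E i u = (THE v. (i, v) \<in> E \<and> v \<noteq> u)"

(* Algorithm GEN; fcl e = True iff edge e is labeled first-class; gbar = 1 - g of the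
   reference process; p is GEN's own law (used for g_{u,v}). *)
definition gen_rate :: "('i::finite \<times> 'j::finite) set \<Rightarrow> ('i \<Rightarrow> real) \<Rightarrow> ('i \<times> 'j \<Rightarrow> bool)
    \<Rightarrow> real \<Rightarrow> (real \<Rightarrow> real) \<Rightarrow> (real \<Rightarrow> ('i,'j) mstate \<Rightarrow> real)
    \<Rightarrow> real \<Rightarrow> ('i,'j) mstate \<Rightarrow> 'i \<Rightarrow> 'j \<Rightarrow> real" where
  "gen_rate E lam fcl t0 gbar p s \<sigma> i u =
     (if card (nbrs E i) = 1 then lam i
      else if fcl (i, u) then lam i / 2
      else if t0 < s then
        (let v = other E i u; gbuv = 1 - gboth p u v s in
          if \<sigma> v = None then lam i * (gbar s / (2 * gbuv))
          else lam i * (gbar s / gbuv))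
      else 0)"

datatype hoff = HA | HB
datatype htype = HC | HSA | HSB

instance hoff :: finite
proof
  have "(UNIV :: hoff set) = {HA, HB}" using hoff.exhaust by auto
  then show "finite (UNIV :: hoff set)" by (metis finite.emptyI finite_insert)
qed

instance htype :: finite
proof
  have "(UNIV :: htype set) = {HC, HSA, HSB}" using htype.exhaust by auto
  then show "finite (UNIV :: htype set)" by (metis finite.emptyI finite_insert)
qed

definition H_E :: "(htype \<times> hoff) set" where
  "H_E = {(HC, HA), (HC, HB), (HSA, HA), (HSB, HB)}"

definition H_lam :: "htype \<Rightarrow> real" where
  "H_lam i = (case i of HC \<Rightarrow> 2 * ln 2 | HSA \<Rightarrow> 1 - ln 2 | HSB \<Rightarrow> 1 - ln 2)"

definition H_g :: "(real \<Rightarrow> (htype,hoff) mstate \<Rightarrow> real) \<Rightarrow> real \<Rightarrow> real" where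
  "H_g pH t = gboth pH HA HB t"

definition H_q1 :: "(real \<Rightarrow> (htype,hoff) mstate \<Rightarrow> real) \<Rightarrow> real \<Rightarrow> real" where
  "H_q1 pH t = qedge pH HSA HA t"

definition H_q2 :: "(real \<Rightarrow> (htype,hoff) mstate \<Rightarrow> real) \<Rightarrow> real \<Rightarrow> real" where
  "H_q2 pH t = qedge pH HC HA t"

end

theory Submission
  imports Defs
begin


lemma cont_induct:
  fixes T :: real
  assumes step: "\<And>t. t \<in> {0..T} \<Longrightarrow> \<forall>s\<in>{0..<t}. P s \<Longrightarrow> \<exists>e>0. \<forall>s\<in>{0..T}. s < t + e \<longrightarrow> P s"
  shows "\<forall>s\<in>{0..T}. P s"
proof (rule ccontr)
  assume "\<not> (\<forall>s\<in>{0..T}. P s)"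
  define B where "B = {s\<in>{0..T}. \<not> P s}"
  have Bne: "B \<noteq> {}" using \<open>\<not> (\<forall>s\<in>{0..T}. P s)\<close> B_def by auto
  have bdd: "bdd_below B" unfolding B_def by (rule bdd_belowI[of _ 0]) auto
  define \<tau> where "\<tau> = Inf B"
  have t0: "0 \<le> \<tau>" unfolding \<tau>_def using Bne by (intro cInf_greatest) (auto simp: B_def)
  obtain b where b: "b \<in> B" using Bne by auto
  have "\<tau> \<le> b" unfolding \<tau>_def using b bdd by (rule cInf_lower)
  hence tT: "\<tau> \<le> T" using b by (auto simp: B_def)
  have below: "\<forall>s\<in>{0..<\<tau>}. P s"
  proof
    fix s assume s: "s \<in> {0..<\<tau>}"
    show "P s"
    proof (rule ccontr)
      assume "\<not> P s"
      hence "s \<in> B" using s tT by (auto simp: B_def)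
      hence "\<tau> \<le> s" unfolding \<tau>_def using bdd by (rule cInf_lower)
      thus False using s by auto
    qed
  qed
  obtain e where e: "e > 0" "\<forall>s\<in>{0..T}. s < \<tau> + e \<longrightarrow> P s" using step[OF _ below] t0 tT by auto
  have "\<tau> + e \<le> \<tau>" unfolding \<tau>_def[symmetric]
    apply (subst (2) \<tau>_def) apply (rule cInf_greatest[OF Bne])
    using e(2) by (force simp: B_def)
  thus False using e(1) by simp
qed

lemma left_closed:
  fixes g :: "real \<Rightarrow> real"
  assumes g: "continuous_on {0..T} g" and t: "0 < t" "t \<le> T" and le: "\<forall>s\<in>{0..<t}. g s \<le> c"
  shows "g t \<le> c"
proof (rule ccontr)
  assume "\<not> g t \<le> c"
  then obtain d where d: "d > 0" "\<forall>x'\<in>{0..T}. dist x' t < d \<longrightarrow> dist (g x') (g t) < g t - c"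
    using g t unfolding continuous_on_iff by (metis atLeastAtMost_iff diff_gt_0_iff_gt less_eq_real_def not_le)
  define s where "s = max 0 (t - d/2)"
  have "s \<in> {0..T}" "dist s t < d" "s \<in> {0..<t}" using d t by (auto simp: s_def dist_real_def)
  hence "dist (g s) (g t) < g t - c" "g s \<le> c" using d le by auto
  thus False by (auto simp: dist_real_def)
qed

lemma near_cont:
  fixes g :: "real \<Rightarrow> real"
  assumes g: "continuous_on {0..T} g" and t: "t \<in> {0..T}" and lt: "g t < c"
  shows "\<exists>e>0. \<forall>s\<in>{0..T}. \<bar>s - t\<bar> < e \<longrightarrow> g s < c"
proof -
  obtain d where d: "d > 0" "\<forall>x'\<in>{0..T}. dist x' t < d \<longrightarrow> dist (g x') (g t) < c - g t"
    using g t lt unfolding continuous_on_iff by (metis diff_gt_0_iff_gt)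
  show ?thesis using d by (intro exI[of _ d]) (auto simp: dist_real_def)
qed

lemma finite_eps:
  assumes "finite X" "\<forall>x\<in>X. \<exists>e>(0::real). \<forall>s. \<bar>s - t\<bar> < e \<longrightarrow> Q x s"
  shows "\<exists>e>0. \<forall>x\<in>X. \<forall>s. \<bar>s - t\<bar> < e \<longrightarrow> Q x s"
  using assms
proof (induction X rule: finite_induct)
  case empty then show ?case by (auto intro: exI[of _ 1])
next
  case (insert a X)
  then obtain e1 where e1: "e1 > 0" "\<forall>x\<in>X. \<forall>s. \<bar>s - t\<bar> < e1 \<longrightarrow> Q x s" by auto
  obtain e2 where e2: "e2 > 0" "\<forall>s. \<bar>s - t\<bar> < e2 \<longrightarrow> Q a s" using insert by auto
  show ?case using e1 e2 by (intro exI[of _ "min e1 e2"]) auto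
qed

lemma gronwall0:
  fixes M :: "real \<Rightarrow> real"
  assumes Mc: "continuous_on {0..T} M" and Mnn: "\<forall>t\<in>{0..T}. M t \<ge> 0" and C: "C \<ge> 0"
    and bnd: "\<forall>t\<in>{0..T}. M t \<le> C * integral {0..t} M"
  shows "\<forall>t\<in>{0..T}. M t = 0"
proof (rule cont_induct)
  fix t assume t: "t \<in> {0..T}" and below: "\<forall>s\<in>{0..<t}. M s = 0"
  have Mt: "M t = 0"
  proof (cases "t = 0")
    case True then show ?thesis using bnd Mnn t by fastforce
  next
    case False
    have "M t \<le> 0" using left_closed[OF Mc, of t 0] False t below by auto
    moreover have "0 \<le> M t" using Mnn t by blast
    ultimately show ?thesis by linarith
  qed
  have zero_upto: "\<forall>s\<in>{0..t}. M s = 0" using below Mt by auto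
  define e where "e = 1 / (2 * C + 2)"
  have e: "e > 0" "C * e \<le> 1/2" using C by (auto simp: e_def field_simps)
  define b where "b = min T (t + e)"
  have tb: "t \<le> b" using t e by (auto simp: b_def)
  have Mcb: "continuous_on {t..b} M" using Mc by (rule continuous_on_subset) (use t in \<open>auto simp: b_def\<close>)
  obtain m where m: "m \<in> {t..b}" "\<forall>y\<in>{t..b}. M y \<le> M m"
    using continuous_attains_sup[OF compact_Icc _ Mcb] tb by auto
  have "M m \<le> C * integral {0..m} M" using bnd m t by (auto simp: b_def)
  also have "integral {0..m} M = integral {0..t} M + integral {t..m} M"
  proof -
    have "continuous_on {0..m} M" using Mc by (rule continuous_on_subset) (use m in \<open>auto simp: b_def\<close>)
    hence Mi: "M integrable_on {0..m}" by (rule integrable_continuous_interval)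
    show ?thesis using Henstock_Kurzweil_Integration.integral_combine[OF _ _ Mi, of t] t m by auto
  qed
  also have "integral {0..t} M = 0" using integral_cong[of "{0..t}" M "\<lambda>_. 0"] zero_upto by simp
  also have "integral {t..m} M \<le> integral {t..m} (\<lambda>_. M m)"
    apply (rule integral_le)
    using Mcb m by (auto intro!: integrable_continuous_interval elim!: continuous_on_subset)
  also have "\<dots> = (m - t) * M m" using m by simp
  finally have "M m \<le> C * ((m - t) * M m)" using C by (simp add: mult_left_mono)
  also have "\<dots> \<le> C * (e * M m)"
    using C m Mnn t by (intro mult_left_mono mult_right_mono) (auto simp: b_def)
  also have "\<dots> \<le> (1/2) * M m" using e Mnn m t
    by (metis (no_types, opaque_lifting) mult.assoc atLeastAtMost_iff b_def min.bounded_iff mult_right_mono order_trans tb)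
  finally have "M m \<le> 0" by simp
  have zb: "\<forall>y\<in>{t..b}. M y = 0"
  proof
    fix y assume y: "y \<in> {t..b}"
    have "y \<in> {0..T}" using y t by (auto simp: b_def)
    hence "0 \<le> M y" using Mnn by blast
    moreover have "M y \<le> M m" using m y by blast
    ultimately show "M y = 0" using \<open>M m \<le> 0\<close> by linarith
  qed
  show "\<exists>e>0. \<forall>s\<in>{0..T}. s < t + e \<longrightarrow> M s = 0"
  proof (intro exI[of _ e] conjI ballI impI)
    fix s assume s: "s \<in> {0..T}" "s < t + e"
    show "M s = 0"
    proof (cases "s < t")
      case True then show ?thesis using below s by auto
    next
      case False then show ?thesis using zb s by (auto simp: b_def)
    qed
  qed (rule e)
qed


lemma ml_int:
  assumes law: "matched_law E r p" and ab: "0 \<le> a" "a \<le> b" "b \<le> 1"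
  shows "((\<lambda>s. flow E r p s \<sigma>) has_integral (p b \<sigma> - p a \<sigma>)) {a..b}"
proof -
  have L: "\<forall>t\<in>{0..1}. \<forall>\<sigma>. ((\<lambda>s. flow E r p s \<sigma>) has_integral (p t \<sigma> - p 0 \<sigma>)) {0..t}"
    using law unfolding matched_law_def by blast
  have "b \<in> {0..1}" "a \<in> {0..1}" using ab by auto
  hence hb: "((\<lambda>s. flow E r p s \<sigma>) has_integral (p b \<sigma> - p 0 \<sigma>)) {0..b}"
    and ha: "((\<lambda>s. flow E r p s \<sigma>) has_integral (p a \<sigma> - p 0 \<sigma>)) {0..a}"
    using L by blast+
  have ib: "(\<lambda>s. flow E r p s \<sigma>) integrable_on {0..b}" using hb by blast
  have iab: "(\<lambda>s. flow E r p s \<sigma>) integrable_on {a..b}"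
    by (rule integrable_on_subinterval[OF ib]) (use ab in auto)
  have "integral {0..a} (\<lambda>s. flow E r p s \<sigma>) + integral {a..b} (\<lambda>s. flow E r p s \<sigma>)
        = integral {0..b} (\<lambda>s. flow E r p s \<sigma>)"
    using Henstock_Kurzweil_Integration.integral_combine[OF _ _ ib, of a] ab by auto
  hence "integral {a..b} (\<lambda>s. flow E r p s \<sigma>) = p b \<sigma> - p a \<sigma>"
    using integral_unique[OF ha] integral_unique[OF hb] by simp
  thus ?thesis using iab by (metis has_integral_integrable_integral)
qed

lemma ml_cont:
  assumes law: "matched_law E r p"
  shows "continuous_on {0..1} (\<lambda>t. p t \<sigma>)"
proof -
  have h1: "((\<lambda>s. flow E r p s \<sigma>) has_integral (p 1 \<sigma> - p 0 \<sigma>)) {0..1}"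
    using ml_int[OF law, of 0 1] by simp
  hence i1: "(\<lambda>s. flow E r p s \<sigma>) integrable_on {0..1}" by blast
  have c: "continuous_on {0..1} (\<lambda>t. p 0 \<sigma> + integral {0..t} (\<lambda>s. flow E r p s \<sigma>))"
    by (intro continuous_intros indefinite_integral_continuous_1 i1)
  have eq: "\<And>t. t \<in> {0..1} \<Longrightarrow> p 0 \<sigma> + integral {0..t} (\<lambda>s. flow E r p s \<sigma>) = p t \<sigma>"
  proof -
    fix t :: real assume t: "t \<in> {0..1}"
    have "((\<lambda>s. flow E r p s \<sigma>) has_integral (p t \<sigma> - p 0 \<sigma>)) {0..t}"
      using t by (intro ml_int[OF law]) auto
    hence "integral {0..t} (\<lambda>s. flow E r p s \<sigma>) = p t \<sigma> - p 0 \<sigma>" by (rule integral_unique)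
    thus "p 0 \<sigma> + integral {0..t} (\<lambda>s. flow E r p s \<sigma>) = p t \<sigma>" by simp
  qed
  show ?thesis by (rule continuous_on_eq[OF c eq])
qed

lemma ml_cont_sum:
  assumes law: "matched_law E r p"
  shows "continuous_on {0..1} (\<lambda>t. \<Sum>\<sigma>\<in>S. p t \<sigma>)"
  by (intro continuous_on_sum ml_cont[OF law])

lemma ml_int_sum:
  fixes E :: "('i::finite \<times> 'j::finite) set"
  assumes law: "matched_law E r p" and ab: "0 \<le> a" "a \<le> b" "b \<le> 1"
  shows "((\<lambda>s. \<Sum>\<sigma>\<in>S. flow E r p s \<sigma>) has_integral (\<Sum>\<sigma>\<in>S. p b \<sigma> - p a \<sigma>)) {a..b}"
  by (rule has_integral_sum) (auto intro: ml_int[OF law ab])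

lemma reindex_in:
  fixes E :: "('i::finite \<times> 'j::finite) set" and G :: "('i,'j) mstate \<Rightarrow> 'j \<Rightarrow> real"
  shows "(\<Sum>\<sigma>\<in>UNIV. \<Sum>u\<in>{u. \<sigma> u \<noteq> None \<and> (the (\<sigma> u), u) \<in> E}. G \<sigma> u)
       = (\<Sum>\<sigma>\<in>UNIV. \<Sum>e\<in>{e\<in>E. \<sigma> (snd e) = None}. G (\<sigma>(snd e := Some (fst e))) (snd e))"
proof -
  have "(\<Sum>\<sigma>\<in>UNIV. \<Sum>u\<in>{u. \<sigma> u \<noteq> None \<and> (the (\<sigma> u), u) \<in> E}. G \<sigma> u)
      = (\<Sum>(\<sigma>,u)\<in>Sigma UNIV (\<lambda>\<sigma>. {u. \<sigma> u \<noteq> None \<and> (the (\<sigma> u), u) \<in> E}). G \<sigma> u)"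
    by (rule sum.Sigma) auto
  also have "\<dots> = (\<Sum>(\<sigma>,e)\<in>Sigma UNIV (\<lambda>\<sigma>. {e\<in>E. \<sigma> (snd e) = None}). G (\<sigma>(snd e := Some (fst e))) (snd e))"
    apply (rule sum.reindex_bij_witness[where j = "\<lambda>(\<sigma>,u). (\<sigma>(u := None), (the (\<sigma> u), u))"
          and i = "\<lambda>(\<sigma>,e). (\<sigma>(snd e := Some (fst e)), snd e)"])
    by (auto simp: fun_upd_idem)
  also have "\<dots> = (\<Sum>\<sigma>\<in>UNIV. \<Sum>e\<in>{e\<in>E. \<sigma> (snd e) = None}. G (\<sigma>(snd e := Some (fst e))) (snd e))"
    by (rule sum.Sigma[symmetric]) auto
  finally show ?thesis .
qed

lemma flow_sum:
  fixes E :: "('i::finite \<times> 'j::finite) set"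
  shows "(\<Sum>\<sigma>\<in>S. flow E r p s \<sigma>) =
    (\<Sum>\<sigma>\<in>UNIV. \<Sum>e\<in>{e\<in>E. \<sigma> (snd e) = None}.
       ((if \<sigma>(snd e := Some (fst e)) \<in> S then 1 else 0) - (if \<sigma> \<in> S then 1 else 0))
       * (p s \<sigma> * r s \<sigma> (fst e) (snd e)))"
proof -
  define In where "In \<sigma> = (\<Sum>u\<in>{u. \<sigma> u \<noteq> None}.
        if (the (\<sigma> u), u) \<in> E
        then p s (\<sigma>(u := None)) * r s (\<sigma>(u := None)) (the (\<sigma> u)) u else 0)" for \<sigma>
  define Out where "Out \<sigma> = p s \<sigma> * (\<Sum>e\<in>{e\<in>E. \<sigma> (snd e) = None}. r s \<sigma> (fst e) (snd e))" for \<sigma>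
  have fl: "flow E r p s \<sigma> = In \<sigma> - Out \<sigma>" for \<sigma> unfolding flow_def In_def Out_def by simp
  define ind where "ind \<sigma> = (if \<sigma> \<in> S then 1 else (0::real))" for \<sigma>
  have "(\<Sum>\<sigma>\<in>S. flow E r p s \<sigma>) = (\<Sum>\<sigma>\<in>UNIV. ind \<sigma> * (In \<sigma> - Out \<sigma>))"
  proof -
    have "(\<Sum>\<sigma>\<in>UNIV. ind \<sigma> * (In \<sigma> - Out \<sigma>)) = (\<Sum>\<sigma>\<in>UNIV. if \<sigma> \<in> S then In \<sigma> - Out \<sigma> else 0)"
      unfolding ind_def by (rule sum.cong) auto
    also have "\<dots> = (\<Sum>\<sigma>\<in>{\<sigma>\<in>UNIV. \<sigma> \<in> S}. In \<sigma> - Out \<sigma>)"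
      by (rule sum.inter_filter[symmetric]) simp
    finally show ?thesis unfolding fl by simp
  qed
  also have "\<dots> = (\<Sum>\<sigma>\<in>UNIV. ind \<sigma> * In \<sigma>) - (\<Sum>\<sigma>\<in>UNIV. ind \<sigma> * Out \<sigma>)"
    by (simp add: right_diff_distrib sum_subtractf)
  also have "(\<Sum>\<sigma>\<in>UNIV. ind \<sigma> * In \<sigma>) =
     (\<Sum>\<sigma>\<in>UNIV. \<Sum>u\<in>{u. \<sigma> u \<noteq> None \<and> (the (\<sigma> u), u) \<in> E}.
        ind \<sigma> * (p s (\<sigma>(u := None)) * r s (\<sigma>(u := None)) (the (\<sigma> u)) u))"
  proof (rule sum.cong[OF refl])
    fix \<sigma> :: "('i,'j) mstate"
    have "In \<sigma> = (\<Sum>u\<in>{u. \<sigma> u \<noteq> None \<and> (the (\<sigma> u), u) \<in> E}.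
        p s (\<sigma>(u := None)) * r s (\<sigma>(u := None)) (the (\<sigma> u)) u)"
      unfolding In_def by (subst sum.inter_filter[symmetric]) (auto intro!: sum.cong)
    thus "ind \<sigma> * In \<sigma> = (\<Sum>u\<in>{u. \<sigma> u \<noteq> None \<and> (the (\<sigma> u), u) \<in> E}.
        ind \<sigma> * (p s (\<sigma>(u := None)) * r s (\<sigma>(u := None)) (the (\<sigma> u)) u))"
      by (simp add: sum_distrib_left)
  qed
  also have "\<dots> = (\<Sum>\<sigma>\<in>UNIV. \<Sum>e\<in>{e\<in>E. \<sigma> (snd e) = None}.
       ind (\<sigma>(snd e := Some (fst e))) * (p s \<sigma> * r s \<sigma> (fst e) (snd e)))"
    apply (subst reindex_in)
    apply (rule sum.cong[OF refl])+
    by (auto simp: fun_upd_idem)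
  also have "(\<Sum>\<sigma>\<in>UNIV. ind \<sigma> * Out \<sigma>) = (\<Sum>\<sigma>\<in>UNIV. \<Sum>e\<in>{e\<in>E. \<sigma> (snd e) = None}.
       ind \<sigma> * (p s \<sigma> * r s \<sigma> (fst e) (snd e)))"
    unfolding Out_def by (simp add: sum_distrib_left mult.assoc)
  finally have fin: "(\<Sum>\<sigma>\<in>S. flow E r p s \<sigma>) =
    (\<Sum>\<sigma>\<in>UNIV. \<Sum>e\<in>{e\<in>E. \<sigma> (snd e) = None}.
       ind (\<sigma>(snd e := Some (fst e))) * (p s \<sigma> * r s \<sigma> (fst e) (snd e))) -
    (\<Sum>\<sigma>\<in>UNIV. \<Sum>e\<in>{e\<in>E. \<sigma> (snd e) = None}.
       ind \<sigma> * (p s \<sigma> * r s \<sigma> (fst e) (snd e)))" .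
  show ?thesis unfolding fin ind_def[symmetric]
    by (simp only: sum_subtractf[symmetric] left_diff_distrib)
qed


definition EI :: "(real \<Rightarrow> ('i,'j) mstate \<Rightarrow> real) \<Rightarrow> (real \<Rightarrow> ('i,'j) mstate \<Rightarrow> 'i \<Rightarrow> 'j \<Rightarrow> real)
   \<Rightarrow> real \<Rightarrow> 'i \<Rightarrow> 'j \<Rightarrow> real" where
  "EI p r s i u = (\<Sum>\<sigma>\<in>{\<sigma>. \<sigma> u = None}. p s \<sigma> * r s \<sigma> i u)"

lemma flow_total:
  fixes E :: "('i::finite \<times> 'j::finite) set"
  shows "(\<Sum>\<sigma>\<in>UNIV. flow E r p s \<sigma>) = 0"
  by (subst flow_sum) simp

lemma mass:
  fixes E :: "('i::finite \<times> 'j::finite) set"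
  assumes law: "matched_law E r p" and t: "t \<in> {0..1}"
  shows "(\<Sum>\<sigma>\<in>UNIV. p t \<sigma>) = 1"
proof -
  have "((\<lambda>s. \<Sum>\<sigma>\<in>UNIV. flow E r p s \<sigma>) has_integral (\<Sum>\<sigma>\<in>UNIV. p t \<sigma> - p 0 \<sigma>)) {0..t}"
    using t by (intro ml_int_sum[OF law]) auto
  hence "((\<lambda>s. 0) has_integral (\<Sum>\<sigma>\<in>UNIV. p t \<sigma> - p 0 \<sigma>)) {0..t}"
    by (simp only: flow_total)
  hence z: "(\<Sum>\<sigma>\<in>UNIV. p t \<sigma> - p 0 \<sigma>) = 0" using has_integral_0 has_integral_unique by blast
  have p0: "p 0 \<sigma> = (if \<sigma> = (\<lambda>_. None) then 1 else 0)" for \<sigma>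
    using law unfolding matched_law_def by blast
  have "(\<Sum>\<sigma>\<in>UNIV. p 0 \<sigma>) = 1" unfolding p0 by (simp add: sum.delta)
  thus ?thesis using z by (simp add: sum_subtractf)
qed

lemma marg_flow:
  fixes E :: "('i::finite \<times> 'j::finite) set"
  shows "(\<Sum>\<sigma>\<in>{\<sigma>. \<sigma> u \<noteq> None}. flow E r p s \<sigma>) = (\<Sum>i\<in>{i. (i,u)\<in>E}. EI p r s i u)"
proof -
  have "(\<Sum>\<sigma>\<in>{\<sigma>. \<sigma> u \<noteq> None}. flow E r p s \<sigma>) =
     (\<Sum>\<sigma>\<in>UNIV. \<Sum>e\<in>{e\<in>E. \<sigma> (snd e) = None}.
       (if \<sigma> u = None \<and> snd e = u then 1 else 0) * (p s \<sigma> * r s \<sigma> (fst e) (snd e)))"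
    apply (subst flow_sum)
    apply (rule sum.cong[OF refl])+
    by auto
  also have "\<dots> = (\<Sum>\<sigma>\<in>UNIV. if \<sigma> u = None then
       (\<Sum>e\<in>{e\<in>E. snd e = u}. p s \<sigma> * r s \<sigma> (fst e) (snd e)) else 0)"
  proof (rule sum.cong[OF refl])
    fix \<sigma> :: "('i,'j) mstate"
    show "(\<Sum>e\<in>{e\<in>E. \<sigma> (snd e) = None}.
       (if \<sigma> u = None \<and> snd e = u then 1 else 0) * (p s \<sigma> * r s \<sigma> (fst e) (snd e))) =
       (if \<sigma> u = None then (\<Sum>e\<in>{e\<in>E. snd e = u}. p s \<sigma> * r s \<sigma> (fst e) (snd e)) else 0)"
    proof (cases "\<sigma> u = None")
      case True
      have "(\<Sum>e\<in>{e\<in>E. \<sigma> (snd e) = None}.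
         (if \<sigma> u = None \<and> snd e = u then 1 else 0) * (p s \<sigma> * r s \<sigma> (fst e) (snd e)))
         = (\<Sum>e\<in>{e\<in>E. \<sigma> (snd e) = None}. if snd e = u then p s \<sigma> * r s \<sigma> (fst e) (snd e) else 0)"
        using True by (intro sum.cong) auto
      also have "\<dots> = (\<Sum>e\<in>{e\<in>{e\<in>E. \<sigma> (snd e) = None}. snd e = u}. p s \<sigma> * r s \<sigma> (fst e) (snd e))"
        by (rule sum.inter_filter[symmetric]) simp
      also have "{e\<in>{e\<in>E. \<sigma> (snd e) = None}. snd e = u} = {e\<in>E. snd e = u}" using True by auto
      finally show ?thesis using True by simp
    next
      case False
      show ?thesis by (simp add: False)
    qed
  qed
  also have "\<dots> = (\<Sum>\<sigma>\<in>{\<sigma>. \<sigma> u = None}. \<Sum>e\<in>{e\<in>E. snd e = u}. p s \<sigma> * r s \<sigma> (fst e) (snd e))"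
    by (subst sum.inter_filter[symmetric]) auto
  also have "\<dots> = (\<Sum>\<sigma>\<in>{\<sigma>. \<sigma> u = None}. \<Sum>i\<in>{i. (i,u)\<in>E}. p s \<sigma> * r s \<sigma> i u)"
  proof (rule sum.cong[OF refl])
    fix \<sigma> :: "('i,'j) mstate"
    have "{e\<in>E. snd e = u} = (\<lambda>i. (i,u)) ` {i. (i,u)\<in>E}" by force
    moreover have "inj_on (\<lambda>i. (i,u)) {i. (i,u)\<in>E}" by (auto simp: inj_on_def)
    ultimately show "(\<Sum>e\<in>{e\<in>E. snd e = u}. p s \<sigma> * r s \<sigma> (fst e) (snd e)) =
        (\<Sum>i\<in>{i. (i,u)\<in>E}. p s \<sigma> * r s \<sigma> i u)"
      by (simp add: sum.reindex)
  qed
  also have "\<dots> = (\<Sum>i\<in>{i. (i,u)\<in>E}. EI p r s i u)"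
    unfolding EI_def by (rule sum.swap)
  finally show ?thesis .
qed

lemma edge_flow:
  fixes E :: "('i::finite \<times> 'j::finite) set"
  assumes iu: "(i,u) \<in> E"
  shows "(\<Sum>\<sigma>\<in>{\<sigma>. \<sigma> u = Some i}. flow E r p s \<sigma>) = EI p r s i u"
proof -
  have "(\<Sum>\<sigma>\<in>{\<sigma>. \<sigma> u = Some i}. flow E r p s \<sigma>) =
     (\<Sum>\<sigma>\<in>UNIV. \<Sum>e\<in>{e\<in>E. \<sigma> (snd e) = None}.
       (if \<sigma> u = None \<and> e = (i,u) then 1 else 0) * (p s \<sigma> * r s \<sigma> (fst e) (snd e)))"
    apply (subst flow_sum)
    apply (rule sum.cong[OF refl])+
    by auto
  also have "\<dots> = (\<Sum>\<sigma>\<in>UNIV. if \<sigma> u = None then p s \<sigma> * r s \<sigma> i u else 0)"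
  proof (rule sum.cong[OF refl])
    fix \<sigma> :: "('i,'j) mstate"
    show "(\<Sum>e\<in>{e\<in>E. \<sigma> (snd e) = None}.
       (if \<sigma> u = None \<and> e = (i,u) then 1 else 0) * (p s \<sigma> * r s \<sigma> (fst e) (snd e))) =
       (if \<sigma> u = None then p s \<sigma> * r s \<sigma> i u else 0)"
    proof (cases "\<sigma> u = None")
      case True
      have "(\<Sum>e\<in>{e\<in>E. \<sigma> (snd e) = None}.
         (if \<sigma> u = None \<and> e = (i,u) then 1 else 0) * (p s \<sigma> * r s \<sigma> (fst e) (snd e)))
         = (\<Sum>e\<in>{e\<in>E. \<sigma> (snd e) = None}. if e = (i,u) then p s \<sigma> * r s \<sigma> (fst e) (snd e) else 0)"
        using True by (intro sum.cong) auto
      also have "\<dots> = p s \<sigma> * r s \<sigma> i u"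
        using True iu by (subst sum.delta) auto
      finally show ?thesis using True by simp
    next
      case False
      show ?thesis by (simp add: False)
    qed
  qed
  also have "\<dots> = EI p r s i u"
    unfolding EI_def by (subst sum.inter_filter[symmetric]) auto
  finally show ?thesis .
qed

lemma flow_split:
  "flow E r p s \<sigma> = (\<Sum>u\<in>{u. \<sigma> u \<noteq> None}.
        if (the (\<sigma> u), u) \<in> E
        then p s (\<sigma>(u := None)) * r s (\<sigma>(u := None)) (the (\<sigma> u)) u else 0)
     - p s \<sigma> * (\<Sum>e\<in>{e\<in>E. \<sigma> (snd e) = None}. r s \<sigma> (fst e) (snd e))"
  unfolding flow_def by simp

lemma positivity:
  fixes E :: "('i::finite \<times> 'j::finite) set"
  assumes law: "matched_law E r p" and T: "T \<le> 1"
    and rnn: "\<forall>s\<in>{0..T}. \<forall>\<sigma> i u. r s \<sigma> i u \<ge> 0"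
  shows "\<forall>t\<in>{0..T}. p t \<sigma> \<ge> 0"
proof (induction "card {w. \<sigma> w \<noteq> None}" arbitrary: \<sigma> rule: less_induct)
  case less
  have IH: "\<And>u s. \<sigma> u \<noteq> None \<Longrightarrow> s \<in> {0..T} \<Longrightarrow> p s (\<sigma>(u := None)) \<ge> 0"
  proof -
    fix u s assume u: "\<sigma> u \<noteq> None" and s: "s \<in> {0..T}"
    have "{w. (\<sigma>(u := None)) w \<noteq> None} \<subset> {w. \<sigma> w \<noteq> None}" using u by auto
    hence "card {w. (\<sigma>(u := None)) w \<noteq> None} < card {w. \<sigma> w \<noteq> None}"
      by (rule psubset_card_mono[rotated]) simp
    thus "p s (\<sigma>(u := None)) \<ge> 0" using less s by blast
  qed
  have fl_nn: "flow E r p s \<sigma> \<ge> 0" if s: "s \<in> {0..T}" and neg: "p s \<sigma> \<le> 0" for s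
  proof -
    define In where "In = (\<Sum>u\<in>{u. \<sigma> u \<noteq> None}.
        if (the (\<sigma> u), u) \<in> E
        then p s (\<sigma>(u := None)) * r s (\<sigma>(u := None)) (the (\<sigma> u)) u else 0)"
    define R where "R = (\<Sum>e\<in>{e\<in>E. \<sigma> (snd e) = None}. r s \<sigma> (fst e) (snd e))"
    have "In \<ge> 0" unfolding In_def
      using IH[OF _ s] rnn s by (intro sum_nonneg) auto
    moreover have "R \<ge> 0" unfolding R_def
      using rnn s by (intro sum_nonneg) auto
    hence "p s \<sigma> * R \<le> 0" using neg by (simp add: mult_nonpos_nonneg)
    moreover have "flow E r p s \<sigma> = In - p s \<sigma> * R" unfolding flow_split In_def R_def ..
    ultimately show ?thesis by linarith
  qed
  have pc: "continuous_on {0..1} (\<lambda>t. p t \<sigma>)" by (rule ml_cont[OF law])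
  have p0: "p 0 \<sigma> \<ge> 0" using law unfolding matched_law_def by simp
  show ?case
  proof (rule ccontr)
    assume "\<not> (\<forall>t\<in>{0..T}. p t \<sigma> \<ge> 0)"
    then obtain t1 where t1: "t1 \<in> {0..T}" "p t1 \<sigma> < 0" by auto
    define S0 where "S0 = {0..t1} \<inter> (\<lambda>t. p t \<sigma>) -` {0..}"
    have cl: "closed S0" unfolding S0_def
      by (rule continuous_closed_preimage) (use pc t1 T in \<open>auto elim!: continuous_on_subset\<close>)
    have "0 \<in> S0" using p0 t1 by (auto simp: S0_def)
    hence ne: "S0 \<noteq> {}" by auto
    have bdd: "bdd_above S0" unfolding S0_def by (rule bdd_aboveI[of _ t1]) auto
    define ts where "ts = Sup S0"
    have tsS: "ts \<in> S0" unfolding ts_def by (rule closed_contains_Sup[OF ne bdd cl])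
    hence ts: "0 \<le> ts" "ts \<le> t1" "p ts \<sigma> \<ge> 0" by (auto simp: S0_def)
    have negs: "p s \<sigma> < 0" if "s \<in> {ts<..t1}" for s
    proof (rule ccontr)
      assume "\<not> p s \<sigma> < 0"
      hence "s \<in> S0" using that ts by (auto simp: S0_def)
      hence "s \<le> ts" unfolding ts_def using bdd by (rule cSup_upper)
      thus False using that by auto
    qed
    have hi: "((\<lambda>s. flow E r p s \<sigma>) has_integral (p t1 \<sigma> - p ts \<sigma>)) {ts..t1}"
      using ts t1 T by (intro ml_int[OF law]) auto
    have hi2: "((\<lambda>s. if s = ts then 0 else flow E r p s \<sigma>) has_integral (p t1 \<sigma> - p ts \<sigma>)) {ts..t1}"
      by (rule has_integral_spike[OF negligible_sing _ hi]) auto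
    have "0 \<le> p t1 \<sigma> - p ts \<sigma>"
    proof (rule has_integral_nonneg[OF hi2])
      fix s assume s: "s \<in> {ts..t1}"
      show "0 \<le> (if s = ts then 0 else flow E r p s \<sigma>)"
      proof (cases "s = ts")
        case False
        hence "s \<in> {ts<..t1}" using s by auto
        hence "p s \<sigma> \<le> 0" using negs by fastforce
        moreover have "s \<in> {0..T}" using s ts t1 by auto
        ultimately show ?thesis using fl_nn False by simp
      qed simp
    qed
    thus False using ts t1 by simp
  qed
qed


definition Fm :: "(real \<Rightarrow> ('i::finite,'j::finite) mstate \<Rightarrow> real) \<Rightarrow> 'j \<Rightarrow> real \<Rightarrow> real" where
  "Fm p u s = (\<Sum>\<sigma>\<in>{\<sigma>. \<sigma> u \<noteq> None}. p s \<sigma>)"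
definition nn :: "(real \<Rightarrow> ('i::finite,'j::finite) mstate \<Rightarrow> real) \<Rightarrow> 'j \<Rightarrow> 'j \<Rightarrow> real \<Rightarrow> real" where
  "nn p u v s = (\<Sum>\<sigma>\<in>{\<sigma>. \<sigma> u = None \<and> \<sigma> v = None}. p s \<sigma>)"
definition nm :: "(real \<Rightarrow> ('i::finite,'j::finite) mstate \<Rightarrow> real) \<Rightarrow> 'j \<Rightarrow> 'j \<Rightarrow> real \<Rightarrow> real" where
  "nm p u v s = (\<Sum>\<sigma>\<in>{\<sigma>. \<sigma> u = None \<and> \<sigma> v \<noteq> None}. p s \<sigma>)"
definition mn :: "(real \<Rightarrow> ('i::finite,'j::finite) mstate \<Rightarrow> real) \<Rightarrow> 'j \<Rightarrow> 'j \<Rightarrow> real \<Rightarrow> real" where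
  "mn p u v s = (\<Sum>\<sigma>\<in>{\<sigma>. \<sigma> u \<noteq> None \<and> \<sigma> v = None}. p s \<sigma>)"

lemma sum_split_pred:
  fixes f :: "'a::finite \<Rightarrow> real"
  shows "(\<Sum>\<sigma>\<in>{\<sigma>. P \<sigma>}. f \<sigma>) = (\<Sum>\<sigma>\<in>{\<sigma>. P \<sigma> \<and> Q \<sigma>}. f \<sigma>) + (\<Sum>\<sigma>\<in>{\<sigma>. P \<sigma> \<and> \<not> Q \<sigma>}. f \<sigma>)"
proof -
  have "{\<sigma>. P \<sigma>} = {\<sigma>. P \<sigma> \<and> Q \<sigma>} \<union> {\<sigma>. P \<sigma> \<and> \<not> Q \<sigma>}" by auto
  thus ?thesis by (simp add: sum.union_disjoint[symmetric] disjoint_iff)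
qed

lemma sum_if_split:
  fixes f :: "'a::finite \<Rightarrow> real"
  shows "(\<Sum>\<sigma>\<in>{\<sigma>. P \<sigma>}. f \<sigma> * (if Q \<sigma> then cy else cn)) =
     cy * (\<Sum>\<sigma>\<in>{\<sigma>. P \<sigma> \<and> Q \<sigma>}. f \<sigma>) + cn * (\<Sum>\<sigma>\<in>{\<sigma>. P \<sigma> \<and> \<not> Q \<sigma>}. f \<sigma>)"
  apply (subst sum_split_pred[where Q = Q])
  apply (simp add: sum_distrib_left)
  apply (intro arg_cong2[where f = "(+)"] sum.cong)
  by auto

lemma total_split:
  fixes p :: "real \<Rightarrow> ('i::finite,'j::finite) mstate \<Rightarrow> real"
  shows "(\<Sum>\<sigma>\<in>UNIV. p s \<sigma>) = (\<Sum>\<sigma>\<in>{\<sigma>. \<sigma> u = None}. p s \<sigma>) + Fm p u s"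
  unfolding Fm_def using sum_split_pred[where P="\<lambda>_. True" and f="p s" and Q="\<lambda>\<sigma>. \<sigma> u = None"] by simp

lemma un_split:
  "(\<Sum>\<sigma>\<in>{\<sigma>. \<sigma> u = None}. p s \<sigma>) = nn p u v s + nm p u v s"
  unfolding nn_def nm_def by (rule sum_split_pred)

lemma Fm_split1: "Fm p u s = mn p u v s + gboth p u v s"
  unfolding Fm_def mn_def gboth_def
  using sum_split_pred[where P="\<lambda>\<sigma>. \<sigma> u \<noteq> None" and f="p s" and Q="\<lambda>\<sigma>. \<sigma> v = None"] by simp

lemma Fm_split2: "Fm p v s = nm p u v s + gboth p u v s"
proof -
  have "Fm p v s = (\<Sum>\<sigma>\<in>{\<sigma>. \<sigma> v \<noteq> None \<and> \<sigma> u = None}. p s \<sigma>) + (\<Sum>\<sigma>\<in>{\<sigma>. \<sigma> v \<noteq> None \<and> \<not> \<sigma> u = None}. p s \<sigma>)"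
    unfolding Fm_def by (rule sum_split_pred)
  also have "{\<sigma>. \<sigma> v \<noteq> None \<and> \<sigma> u = None} = {\<sigma>. \<sigma> u = None \<and> \<sigma> v \<noteq> None}" by auto
  also have "{\<sigma>. \<sigma> v \<noteq> None \<and> \<not> \<sigma> u = None} = {\<sigma>. \<sigma> u \<noteq> None \<and> \<sigma> v \<noteq> None}" by auto
  finally show ?thesis unfolding nm_def gboth_def .
qed

lemma mass_un:
  fixes p :: "real \<Rightarrow> ('i::finite,'j::finite) mstate \<Rightarrow> real"
  assumes "(\<Sum>\<sigma>\<in>UNIV. p s \<sigma>) = 1"
  shows "(\<Sum>\<sigma>\<in>{\<sigma>. \<sigma> u = None}. p s \<sigma>) = 1 - Fm p u s"
  using total_split[of p s u] assms by simp

lemma key_identity: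
  fixes p :: "real \<Rightarrow> ('i::finite,'j::finite) mstate \<Rightarrow> real"
  assumes "(\<Sum>\<sigma>\<in>UNIV. p s \<sigma>) = 1"
  shows "nn p u v s + 2 * nm p u v s = (1 - gboth p u v s) + Fm p v s - Fm p u s"
proof -
  have a: "(\<Sum>\<sigma>\<in>{\<sigma>. \<sigma> u = None}. p s \<sigma>) = 1 - Fm p u s" using assms by (rule mass_un)
  have b: "(\<Sum>\<sigma>\<in>{\<sigma>. \<sigma> u = None}. p s \<sigma>) = nn p u v s + nm p u v s" by (rule un_split)
  have c: "Fm p u s = mn p u v s + gboth p u v s" by (rule Fm_split1)
  have d: "Fm p v s = nm p u v s + gboth p u v s" by (rule Fm_split2)
  show ?thesis using a b c d by linarith
qed

lemma gboth_le:
  fixes p :: "real \<Rightarrow> ('i::finite,'j::finite) mstate \<Rightarrow> real"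
  assumes "\<forall>\<sigma>. p s \<sigma> \<ge> 0"
  shows "gboth p u v s \<le> Fm p u s"
  using Fm_split1[of p u s v] assms unfolding mn_def by (smt (verit) sum_nonneg)

lemma Fm_int:
  fixes E :: "('i::finite \<times> 'j::finite) set"
  assumes law: "matched_law E r p" and ab: "0 \<le> a" "a \<le> b" "b \<le> 1"
  shows "((\<lambda>s. \<Sum>i\<in>{i. (i,u)\<in>E}. EI p r s i u) has_integral (Fm p u b - Fm p u a)) {a..b}"
proof -
  have "((\<lambda>s. \<Sum>\<sigma>\<in>{\<sigma>. \<sigma> u \<noteq> None}. flow E r p s \<sigma>) has_integral
         (\<Sum>\<sigma>\<in>{\<sigma>. \<sigma> u \<noteq> None}. p b \<sigma> - p a \<sigma>)) {a..b}"
    by (rule ml_int_sum[OF law ab])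
  thus ?thesis unfolding marg_flow Fm_def by (simp add: sum_subtractf)
qed

lemma edge_int:
  fixes E :: "('i::finite \<times> 'j::finite) set"
  assumes law: "matched_law E r p" and ab: "0 \<le> a" "a \<le> b" "b \<le> 1" and iu: "(i,u) \<in> E"
  shows "((\<lambda>s. EI p r s i u) has_integral (qedge p i u b - qedge p i u a)) {a..b}"
proof -
  have "((\<lambda>s. \<Sum>\<sigma>\<in>{\<sigma>. \<sigma> u = Some i}. flow E r p s \<sigma>) has_integral
         (\<Sum>\<sigma>\<in>{\<sigma>. \<sigma> u = Some i}. p b \<sigma> - p a \<sigma>)) {a..b}"
    by (rule ml_int_sum[OF law ab])
  thus ?thesis unfolding edge_flow[OF iu] qedge_def by (simp add: sum_subtractf)
qed

lemma p0_val:
  assumes law: "matched_law E r p"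
  shows "p 0 \<sigma> = (if \<sigma> = (\<lambda>_. None) then 1 else 0)"
  using law unfolding matched_law_def by blast

lemma Fm0:
  fixes E :: "('i::finite \<times> 'j::finite) set"
  assumes law: "matched_law E r p"
  shows "Fm p u 0 = 0"
  unfolding Fm_def p0_val[OF law] by (rule sum.neutral) auto

lemma qedge0:
  fixes E :: "('i::finite \<times> 'j::finite) set"
  assumes law: "matched_law E r p"
  shows "qedge p i u 0 = 0"
  unfolding qedge_def p0_val[OF law] by (rule sum.neutral) auto

lemma gboth0:
  fixes E :: "('i::finite \<times> 'j::finite) set"
  assumes law: "matched_law E r p"
  shows "gboth p u v 0 = 0"
  unfolding gboth_def p0_val[OF law] by (rule sum.neutral) auto

lemma Fm_cont:
  fixes E :: "('i::finite \<times> 'j::finite) set"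
  assumes law: "matched_law E r p"
  shows "continuous_on {0..1} (Fm p u)"
  unfolding Fm_def by (rule ml_cont_sum[OF law])

lemma gboth_cont:
  fixes E :: "('i::finite \<times> 'j::finite) set"
  assumes law: "matched_law E r p"
  shows "continuous_on {0..1} (gboth p u v)"
  unfolding gboth_def by (rule ml_cont_sum[OF law])

lemma stay_pos:
  fixes y \<rho> :: "real \<Rightarrow> real"
  assumes yc: "continuous_on {0..1} y" and y0: "y 0 = 1"
    and hi: "\<And>a b. 0 \<le> a \<Longrightarrow> a \<le> b \<Longrightarrow> b \<le> 1 \<Longrightarrow> (\<rho> has_integral (y a - y b)) {a..b}"
    and rnn: "\<forall>s\<in>{0..1}. 0 \<le> \<rho> s" and rle: "\<forall>s\<in>{0..1}. \<rho> s \<le> K * y s" and K: "K \<ge> 0"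
  shows "\<forall>t\<in>{0..1}. y t > 0"
proof (rule ccontr)
  assume "\<not> (\<forall>t\<in>{0..1}. y t > 0)"
  then obtain t1 where t1: "t1 \<in> {0..1}" "y t1 \<le> 0" by auto
  define Z where "Z = {0..t1} \<inter> y -` {..0}"
  have cl: "closed Z" unfolding Z_def
    by (rule continuous_closed_preimage) (use yc t1 in \<open>auto elim!: continuous_on_subset\<close>)
  have "t1 \<in> Z" using t1 by (auto simp: Z_def)
  hence ne: "Z \<noteq> {}" by auto
  have bdd: "bdd_below Z" unfolding Z_def by (rule bdd_belowI[of _ 0]) auto
  define \<tau> where "\<tau> = Inf Z"
  have "\<tau> \<in> Z" unfolding \<tau>_def by (rule closed_contains_Inf[OF ne bdd cl])
  hence tau: "0 \<le> \<tau>" "\<tau> \<le> t1" "y \<tau> \<le> 0" by (auto simp: Z_def)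
  have pos_before: "y s > 0" if "0 \<le> s" "s < \<tau>" for s
  proof (rule ccontr)
    assume "\<not> y s > 0"
    hence "s \<in> Z" using that tau by (auto simp: Z_def)
    hence "\<tau> \<le> s" unfolding \<tau>_def using bdd by (rule cInf_lower)
    thus False using that by auto
  qed
  have "\<tau> \<noteq> 0" using tau y0 by auto
  hence tpos: "\<tau> > 0" using tau by auto
  define a where "a = max 0 (\<tau> - 1 / (2 * K + 2))"
  have a: "0 \<le> a" "a < \<tau>" "\<tau> - a \<le> 1 / (2 * K + 2)" using tpos K by (auto simp: a_def)
  have ya: "y a > 0" using pos_before a by auto
  have mono: "y s \<le> y a" if "a \<le> s" "s \<le> \<tau>" for s
  proof -
    have "(\<rho> has_integral (y a - y s)) {a..s}" using hi a that tau t1 by auto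
    moreover have "\<forall>x\<in>{a..s}. 0 \<le> \<rho> x" using rnn a that tau t1 by auto
    ultimately have "0 \<le> y a - y s" using has_integral_nonneg by blast
    thus ?thesis by simp
  qed
  have h1: "(\<rho> has_integral (y a - y \<tau>)) {a..\<tau>}" using hi a tau t1 by auto
  have h2: "((\<lambda>_. K * y a) has_integral ((\<tau> - a) * (K * y a))) {a..\<tau>}"
    using has_integral_const_real[of "K * y a" a \<tau>] a by simp
  have "y a - y \<tau> \<le> (\<tau> - a) * (K * y a)"
  proof (rule has_integral_le[OF h1 h2])
    fix x assume x: "x \<in> {a..\<tau>}"
    have "\<rho> x \<le> K * y x" using rle x a tau t1 by auto
    also have "\<dots> \<le> K * y a" using mono x K by (auto intro: mult_left_mono)
    finally show "\<rho> x \<le> K * y a" .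
  qed
  also have "\<dots> \<le> (1 / (2 * K + 2)) * (K * y a)"
    using a K ya by (intro mult_right_mono) auto
  also have "\<dots> \<le> y a / 2" using K ya by (simp add: field_simps)
  finally have "y \<tau> \<ge> y a / 2" by simp
  thus False using ya tau by simp
qed


lemma ln2_bounds: "0 < ln (2::real)" "ln (2::real) < 1"
  using ln_2_less_1 by auto

lemma H_nbrs: "nbrs H_E HC = {HA, HB}" "nbrs H_E HSA = {HA}" "nbrs H_E HSB = {HB}"
  by (auto simp: nbrs_def H_E_def)

lemma H_into: "{i. (i, HA) \<in> H_E} = {HC, HSA}" "{i. (i, HB) \<in> H_E} = {HC, HSB}"
  by (auto simp: H_E_def)

locale Href =
  fixes t0 :: real and pH :: "real \<Rightarrow> (htype, hoff) mstate \<Rightarrow> real"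
  assumes ref_law: "matched_law H_E (res_rate H_E H_lam t0) pH"
begin

abbreviation "rH \<equiv> res_rate H_E H_lam t0"
abbreviation "fa \<equiv> Fm pH HA"
abbreviation "fb \<equiv> Fm pH HB"
definition "gbH s = 1 - gboth pH HA HB s"

lemma rH_nn: "rH s \<sigma> i u \<ge> 0"
  using ln2_bounds unfolding res_rate_def H_lam_def by (auto split: htype.splits)

lemma pH_nn: "\<forall>t\<in>{0..1}. pH t \<sigma> \<ge> 0"
  by (rule positivity[OF ref_law order_refl]) (auto intro: rH_nn)

lemma massH: "t \<in> {0..1} \<Longrightarrow> (\<Sum>\<sigma>\<in>UNIV. pH t \<sigma>) = 1"
  by (rule mass[OF ref_law])

lemma EI_HSA: "EI pH rH s HSA HA = (1 - ln 2) * (\<Sum>\<sigma>\<in>{\<sigma>. \<sigma> HA = None}. pH s \<sigma>)"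
  unfolding EI_def res_rate_def H_nbrs H_lam_def by (simp add: sum_distrib_left mult.commute)

lemma EI_HSB: "EI pH rH s HSB HB = (1 - ln 2) * (\<Sum>\<sigma>\<in>{\<sigma>. \<sigma> HB = None}. pH s \<sigma>)"
  unfolding EI_def res_rate_def H_nbrs H_lam_def by (simp add: sum_distrib_left mult.commute)

lemma EI_HC:
  assumes uv: "{u, v} = {HA, HB}" "u \<noteq> v"
  shows "EI pH rH s HC u = (if t0 < s then ln 2 * nn pH u v s + 2 * ln 2 * nm pH u v s else 0)"
proof -
  have rate: "rH s \<sigma> HC u = (if t0 < s then (if \<sigma> v = None then ln 2 else 2 * ln 2) else 0)"
    if "\<sigma> u = None" for \<sigma>
  proof -
    have "{w \<in> {HA, HB}. \<sigma> w = None} = (if \<sigma> v = None then {u, v} else {u})"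
      using uv that by (cases u; cases v) auto
    hence "card {w \<in> {HA, HB}. \<sigma> w = None} = (if \<sigma> v = None then 2 else 1)"
      using uv by auto
    thus ?thesis unfolding res_rate_def H_nbrs H_lam_def by simp
  qed
  have "EI pH rH s HC u = (\<Sum>\<sigma>\<in>{\<sigma>. \<sigma> u = None}. pH s \<sigma> *
      (if t0 < s then (if \<sigma> v = None then ln 2 else 2 * ln 2) else 0))"
    unfolding EI_def by (rule sum.cong) (auto simp: rate)
  also have "\<dots> = (if t0 < s then ln 2 * nn pH u v s + 2 * ln 2 * nm pH u v s else 0)"
  proof (cases "t0 < s")
    case True
    thus ?thesis using sum_if_split[where f = "pH s" and P = "\<lambda>\<sigma>. \<sigma> u = None" and Q = "\<lambda>\<sigma>. \<sigma> v = None"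
        and cy = "ln 2" and cn = "2 * ln 2"] unfolding nn_def nm_def by simp
  qed simp
  finally show ?thesis .
qed

definition "\<rho>A s = EI pH rH s HC HA + EI pH rH s HSA HA"
definition "\<rho>B s = EI pH rH s HC HB + EI pH rH s HSB HB"

lemma fa_int: "0 \<le> a \<Longrightarrow> a \<le> b \<Longrightarrow> b \<le> 1 \<Longrightarrow> (\<rho>A has_integral (fa b - fa a)) {a..b}"
  using Fm_int[OF ref_law, of a b HA] unfolding H_into \<rho>A_def by simp

lemma fb_int: "0 \<le> a \<Longrightarrow> a \<le> b \<Longrightarrow> b \<le> 1 \<Longrightarrow> (\<rho>B has_integral (fb b - fb a)) {a..b}"
  using Fm_int[OF ref_law, of a b HB] unfolding H_into \<rho>B_def by simp

lemma diff_id: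
  assumes s: "s \<in> {0..1}"
  shows "\<rho>A s - \<rho>B s = - ((if t0 < s then 2 * ln 2 else 0) + (1 - ln 2)) * (fa s - fb s)"
proof -
  have m: "(\<Sum>\<sigma>\<in>UNIV. pH s \<sigma>) = 1" using massH s .
  have e1: "EI pH rH s HC HA = (if t0 < s then ln 2 * nn pH HA HB s + 2 * ln 2 * nm pH HA HB s else 0)"
    by (rule EI_HC) auto
  have e2: "EI pH rH s HC HB = (if t0 < s then ln 2 * nn pH HB HA s + 2 * ln 2 * nm pH HB HA s else 0)"
    by (rule EI_HC) auto
  have nnsym: "nn pH HB HA s = nn pH HA HB s" unfolding nn_def by (rule sum.cong) auto
  have nmsym: "nm pH HB HA s = mn pH HA HB s" unfolding nm_def mn_def by (rule sum.cong) auto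
  have f1: "fa s = mn pH HA HB s + gboth pH HA HB s" by (rule Fm_split1)
  have f2: "fb s = nm pH HA HB s + gboth pH HA HB s" by (rule Fm_split2)
  have ua: "(\<Sum>\<sigma>\<in>{\<sigma>. \<sigma> HA = None}. pH s \<sigma>) = 1 - fa s" using m by (rule mass_un)
  have ub: "(\<Sum>\<sigma>\<in>{\<sigma>. \<sigma> HB = None}. pH s \<sigma>) = 1 - fb s" using m by (rule mass_un)
  show ?thesis unfolding \<rho>A_def \<rho>B_def e1 e2 EI_HSA EI_HSB ua ub nnsym nmsym
    using f1 f2 by (auto simp: algebra_simps)
qed

lemma fa_eq_fb: "\<forall>t\<in>{0..1}. fa t = fb t"
proof -
  define M where "M t = \<bar>fa t - fb t\<bar>" for t
  have Mc: "continuous_on {0..1} M" unfolding M_def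
    by (intro continuous_intros Fm_cont[OF ref_law])
  have "\<forall>t\<in>{0..1}. M t = 0"
  proof (rule gronwall0[OF Mc _ _])
    show "\<forall>t\<in>{0..1}. 0 \<le> M t" unfolding M_def by simp
    show "(0::real) \<le> 2" by simp
    show "\<forall>t\<in>{0..1}. M t \<le> 2 * integral {0..t} M"
    proof
      fix t :: real assume t: "t \<in> {0..1}"
      have h: "((\<lambda>s. \<rho>A s - \<rho>B s) has_integral (fa t - fb t)) {0..t}"
        using has_integral_diff[OF fa_int[of 0 t] fb_int[of 0 t]] t Fm0[OF ref_law] by simp
      have Mi: "M integrable_on {0..t}"
        by (rule integrable_continuous_interval) (use Mc t in \<open>auto elim!: continuous_on_subset\<close>)
      have "norm (integral {0..t} (\<lambda>s. \<rho>A s - \<rho>B s)) \<le> integral {0..t} (\<lambda>s. 2 * M s)"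
      proof (rule Henstock_Kurzweil_Integration.integral_norm_bound_integral)
        show "(\<lambda>s. \<rho>A s - \<rho>B s) integrable_on {0..t}" using h by blast
        show "(\<lambda>s. 2 * M s) integrable_on {0..t}" using integrable_on_cmult_left[OF Mi, of 2] by simp
        fix s assume s: "s \<in> {0..t}"
        hence s1: "s \<in> {0..1}" using t by auto
        define c :: real where "c = (if t0 < s then 2 * ln 2 else 0) + (1 - ln 2)"
        have c: "0 \<le> c" "c \<le> 2" unfolding c_def using ln2_bounds by (smt (verit))+
        have "norm (\<rho>A s - \<rho>B s) = \<bar>- c * (fa s - fb s)\<bar>"
          unfolding diff_id[OF s1] c_def by simp
        also have "\<dots> = c * M s" unfolding M_def using c by (simp add: abs_mult)
        also have "\<dots> \<le> 2 * M s"
          using c unfolding M_def by (intro mult_right_mono) auto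
        finally show "norm (\<rho>A s - \<rho>B s) \<le> 2 * M s" .
      qed
      thus "M t \<le> 2 * integral {0..t} M"
        using integral_unique[OF h] unfolding M_def by simp
    qed
  qed
  thus ?thesis unfolding M_def by simp
qed

lemma EI_HC_A: "s \<in> {0..1} \<Longrightarrow> EI pH rH s HC HA = (if t0 < s then ln 2 * gbH s else 0)"
proof -
  assume s: "s \<in> {0..1}"
  have e1: "EI pH rH s HC HA = (if t0 < s then ln 2 * nn pH HA HB s + 2 * ln 2 * nm pH HA HB s else 0)"
    by (rule EI_HC) auto
  have k: "nn pH HA HB s + 2 * nm pH HA HB s = (1 - gboth pH HA HB s) + fb s - fa s"
    using massH[OF s] by (rule key_identity)
  have "fa s = fb s" using fa_eq_fb s by blast
  hence k2: "nn pH HA HB s + 2 * nm pH HA HB s = 1 - gboth pH HA HB s" using k by simp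
  show ?thesis unfolding e1 gbH_def k2[symmetric] by (simp add: algebra_simps)
qed

lemma EI_HSA_A: "s \<in> {0..1} \<Longrightarrow> EI pH rH s HSA HA = (1 - ln 2) * (1 - fa s)"
proof -
  assume s: "s \<in> {0..1}"
  have "(\<Sum>\<sigma>\<in>{\<sigma>. \<sigma> HA = None}. pH s \<sigma>) = 1 - fa s" using massH[OF s] by (rule mass_un)
  thus ?thesis unfolding EI_HSA by simp
qed

lemma fa_lt1: "\<forall>t\<in>{0..1}. fa t < 1"
proof -
  have "\<forall>t\<in>{0..1}. (\<lambda>t. 1 - fa t) t > 0"
  proof (rule stay_pos[where \<rho> = \<rho>A and K = 2])
    show "continuous_on {0..1} (\<lambda>t. 1 - fa t)" by (intro continuous_intros Fm_cont[OF ref_law])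
    show "1 - fa 0 = 1" using Fm0[OF ref_law] by simp
    show "(\<rho>A has_integral ((1 - fa a) - (1 - fa b))) {a..b}" if "0 \<le> a" "a \<le> b" "b \<le> 1" for a b
      using fa_int[OF that] by simp
    show "\<forall>s\<in>{0..1}. 0 \<le> \<rho>A s"
      unfolding \<rho>A_def EI_def using pH_nn rH_nn by (auto intro!: add_nonneg_nonneg sum_nonneg)
    show "\<forall>s\<in>{0..1}. \<rho>A s \<le> 2 * (1 - fa s)"
    proof
      fix s :: real assume s: "s \<in> {0..1}"
      have e1: "EI pH rH s HC HA = (if t0 < s then ln 2 * nn pH HA HB s + 2 * ln 2 * nm pH HA HB s else 0)"
        by (rule EI_HC) auto
      have nn0: "nn pH HA HB s \<ge> 0" "nm pH HA HB s \<ge> 0"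
        unfolding nn_def nm_def using pH_nn s by (auto intro: sum_nonneg)
      have u: "1 - fa s = nn pH HA HB s + nm pH HA HB s"
      proof -
        have "(\<Sum>\<sigma>\<in>{\<sigma>. \<sigma> HA = None}. pH s \<sigma>) = 1 - fa s" using massH[OF s] by (rule mass_un)
        moreover have "(\<Sum>\<sigma>\<in>{\<sigma>. \<sigma> HA = None}. pH s \<sigma>) = nn pH HA HB s + nm pH HA HB s" by (rule un_split)
        ultimately show ?thesis by simp
      qed
      have "\<rho>A s \<le> 2 * ln 2 * (nn pH HA HB s + nm pH HA HB s) + (1 - ln 2) * (nn pH HA HB s + nm pH HA HB s)"
        unfolding \<rho>A_def e1 EI_HSA_A[OF s] u using nn0 ln2_bounds
        by (auto simp: algebra_simps intro: add_nonneg_nonneg mult_nonneg_nonneg)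
      also have "\<dots> \<le> 2 * (1 - fa s)" unfolding u
        using nn0 ln2_bounds mult_right_mono[of "ln 2" 1 "nn pH HA HB s + nm pH HA HB s"]
        by (simp add: algebra_simps)
      finally show "\<rho>A s \<le> 2 * (1 - fa s)" .
    qed
  qed simp
  thus ?thesis by simp
qed

lemma gbH_nn: "s \<in> {0..1} \<Longrightarrow> 0 \<le> gbH s"
  using gboth_le[of pH s HA HB] pH_nn fa_lt1 unfolding gbH_def by fastforce

lemma gbH_cont: "continuous_on {0..1} gbH"
  unfolding gbH_def by (intro continuous_intros gboth_cont[OF ref_law])

lemma H_g_eq: "H_g pH s = 1 - gbH s" unfolding gbH_def H_g_def by simp

lemma fa_int2:
  assumes "0 \<le> a" "a \<le> b" "b \<le> 1"
  shows "((\<lambda>s. (1 - ln 2) * (1 - fa s) + (if t0 < s then ln 2 * gbH s else 0)) has_integral (fa b - fa a)) {a..b}"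
  by (rule has_integral_eq[OF _ fa_int[OF assms]])
     (use assms in \<open>auto simp: \<rho>A_def EI_HC_A EI_HSA_A\<close>)

lemma q1_int:
  assumes "t \<in> {0..1}"
  shows "((\<lambda>s. (1 - ln 2) * (1 - fa s)) has_integral H_q1 pH t) {0..t}"
proof -
  have "((\<lambda>s. EI pH rH s HSA HA) has_integral (qedge pH HSA HA t - qedge pH HSA HA 0)) {0..t}"
    using assms by (intro edge_int[OF ref_law]) (auto simp: H_E_def)
  hence "((\<lambda>s. EI pH rH s HSA HA) has_integral (H_q1 pH t)) {0..t}"
    unfolding H_q1_def qedge0[OF ref_law] by simp
  thus ?thesis by (rule has_integral_eq[rotated]) (use assms in \<open>auto simp: EI_HSA_A\<close>)
qed

lemma q2_int:
  assumes "t \<in> {0..1}"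
  shows "((\<lambda>s. if t0 < s then ln 2 * gbH s else 0) has_integral H_q2 pH t) {0..t}"
proof -
  have "((\<lambda>s. EI pH rH s HC HA) has_integral (qedge pH HC HA t - qedge pH HC HA 0)) {0..t}"
    using assms by (intro edge_int[OF ref_law]) (auto simp: H_E_def)
  hence "((\<lambda>s. EI pH rH s HC HA) has_integral (H_q2 pH t)) {0..t}"
    unfolding H_q2_def qedge0[OF ref_law] by simp
  thus ?thesis by (rule has_integral_eq[rotated]) (use assms in \<open>auto simp: EI_HC_A\<close>)
qed

end


locale Gen = Href +
  fixes E :: "('i::finite \<times> 'j::finite) set"
    and lam :: "'i \<Rightarrow> real"
    and x :: "'i \<Rightarrow> 'j \<Rightarrow> real"
    and fcl :: "'i \<times> 'j \<Rightarrow> bool"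
    and p :: "real \<Rightarrow> ('i, 'j) mstate \<Rightarrow> real"
  assumes lam_pos: "\<forall>i. lam i > 0"
    and x_nonneg: "\<forall>i j. x i j \<ge> 0"
    and x_off: "\<forall>i j. (i, j) \<notin> E \<longrightarrow> x i j = 0"
    and x_sum: "\<forall>j. (\<Sum>i\<in>UNIV. x i j) = 1"
    and classes: "\<forall>i. (card (nbrs E i) = 1 \<and> (\<forall>j\<in>nbrs E i. x i j = lam i))
                     \<or> (card (nbrs E i) = 2 \<and> (\<forall>j\<in>nbrs E i. x i j = lam i / 2))"
    and label_first: "\<forall>i j. (i, j) \<in> E \<and> card (nbrs E i) = 1 \<longrightarrow> fcl (i, j)"
    and label_sum: "\<forall>j. (\<Sum>i\<in>{i. (i, j) \<in> E \<and> fcl (i, j)}. x i j) = 1 - ln 2"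
    and gen_law: "matched_law E (gen_rate E lam fcl t0 (\<lambda>s. 1 - H_g pH s) p) p"
begin

abbreviation "rG \<equiv> gen_rate E lam fcl t0 (\<lambda>s. 1 - H_g pH s) p"

lemma gb_eq: "1 - H_g pH s = gbH s" unfolding H_g_eq by simp

lemma rate_fcl:
  assumes iu: "(i,u) \<in> E" and f: "fcl (i,u)"
  shows "rG s \<sigma> i u = x i u"
proof -
  have u: "u \<in> nbrs E i" using iu by (simp add: nbrs_def)
  show ?thesis using classes[rule_format, of i] u f unfolding gen_rate_def by auto
qed

lemma rate_sec:
  assumes iu: "(i,u) \<in> E" and f: "\<not> fcl (i,u)"
  shows "x i u = lam i / 2"
    and "rG s \<sigma> i u = (if t0 < s then
          (if \<sigma> (other E i u) = None then lam i * (gbH s / (2 * (1 - gboth p u (other E i u) s)))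
           else lam i * (gbH s / (1 - gboth p u (other E i u) s))) else 0)"
proof -
  have u: "u \<in> nbrs E i" using iu by (simp add: nbrs_def)
  have c: "card (nbrs E i) \<noteq> 1" using label_first iu f by auto
  hence c2: "card (nbrs E i) = 2 \<and> x i u = lam i / 2" using classes[rule_format, of i] u by auto
  thus "x i u = lam i / 2" by simp
  show "rG s \<sigma> i u = (if t0 < s then
          (if \<sigma> (other E i u) = None then lam i * (gbH s / (2 * (1 - gboth p u (other E i u) s)))
           else lam i * (gbH s / (1 - gboth p u (other E i u) s))) else 0)"
    unfolding gen_rate_def Let_def gb_eq using c f by simp
qed

lemma rate_nn:
  assumes s: "s \<in> {0..1}" and g: "\<forall>u v. gboth p u v s < 1"
  shows "rG s \<sigma> i u \<ge> 0"
proof -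
  have "gbH s \<ge> 0" using gbH_nn[OF s] .
  moreover have "lam i > 0" using lam_pos by blast
  moreover have "\<forall>v. 1 - gboth p u v s > 0" using g by auto
  ultimately show ?thesis unfolding gen_rate_def Let_def gb_eq
    by (auto intro!: mult_nonneg_nonneg divide_nonneg_pos simp: less_imp_le)
qed

lemma massG: "s \<in> {0..1} \<Longrightarrow> (\<Sum>\<sigma>\<in>UNIV. p s \<sigma>) = 1"
  by (rule mass[OF gen_law])

lemma EI_fcl:
  assumes s: "s \<in> {0..1}" and iu: "(i,u) \<in> E" and f: "fcl (i,u)"
  shows "EI p rG s i u = x i u * (1 - Fm p u s)"
proof -
  have "EI p rG s i u = x i u * (\<Sum>\<sigma>\<in>{\<sigma>. \<sigma> u = None}. p s \<sigma>)"
    unfolding EI_def rate_fcl[OF iu f] by (simp add: sum_distrib_left mult.commute)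
  also have "(\<Sum>\<sigma>\<in>{\<sigma>. \<sigma> u = None}. p s \<sigma>) = 1 - Fm p u s" using massG[OF s] by (rule mass_un)
  finally show ?thesis .
qed

lemma EI_sec:
  assumes s: "s \<in> {0..1}" and iu: "(i,u) \<in> E" and f: "\<not> fcl (i,u)"
    and g: "1 - gboth p u (other E i u) s \<noteq> 0"
  shows "EI p rG s i u = (if t0 < s then x i u * gbH s *
      (1 + (Fm p (other E i u) s - Fm p u s) / (1 - gboth p u (other E i u) s)) else 0)"
proof -
  define v where "v = other E i u"
  define g where "g = 1 - gboth p u v s"
  have gne: "g \<noteq> 0" using g unfolding g_def v_def .
  have xi: "x i u = lam i / 2" by (rule rate_sec(1)[OF iu f])
  show ?thesis
  proof (cases "t0 < s")
    case False
    thus ?thesis unfolding EI_def rate_sec(2)[OF iu f] by simp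
  next
    case True
    have "EI p rG s i u = (\<Sum>\<sigma>\<in>{\<sigma>. \<sigma> u = None}. p s \<sigma> *
        (if \<sigma> v = None then lam i * (gbH s / (2 * g)) else lam i * (gbH s / g)))"
      unfolding EI_def rate_sec(2)[OF iu f] v_def g_def using True by simp
    also have "\<dots> = lam i * (gbH s / (2 * g)) * nn p u v s + lam i * (gbH s / g) * nm p u v s"
      using sum_if_split[where f = "p s" and P = "\<lambda>\<sigma>. \<sigma> u = None" and Q = "\<lambda>\<sigma>. \<sigma> v = None"
        and cy = "lam i * (gbH s / (2 * g))" and cn = "lam i * (gbH s / g)"]
      unfolding nn_def nm_def by simp
    also have "\<dots> = (lam i / 2) * gbH s * (nn p u v s + 2 * nm p u v s) / g"
      using gne by (simp add: field_simps)
    also have "nn p u v s + 2 * nm p u v s = g + Fm p v s - Fm p u s"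
      unfolding g_def using massG[OF s] by (rule key_identity)
    also have "(lam i / 2) * gbH s * (g + Fm p v s - Fm p u s) / g
        = x i u * gbH s * (1 + (Fm p v s - Fm p u s) / g)"
      unfolding xi using gne by (simp add: field_simps)
    finally show ?thesis using True unfolding v_def g_def by simp
  qed
qed

lemma x_in_sum: "(\<Sum>i\<in>{i. (i,u) \<in> E}. x i u) = 1"
proof -
  have "(\<Sum>i\<in>UNIV. x i u) = (\<Sum>i\<in>{i. (i,u) \<in> E}. x i u) + (\<Sum>i\<in>{i. (i,u) \<notin> E}. x i u)"
    using sum_split_pred[where P = "\<lambda>_. True" and f = "\<lambda>i. x i u" and Q = "\<lambda>i. (i,u) \<in> E"] by simp
  moreover have "(\<Sum>i\<in>{i. (i,u) \<notin> E}. x i u) = 0" using x_off by (intro sum.neutral) auto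
  ultimately show ?thesis using x_sum by simp
qed

lemma x_sec_sum: "(\<Sum>i\<in>{i. (i,u) \<in> E \<and> \<not> fcl (i,u)}. x i u) = ln 2"
proof -
  have "(\<Sum>i\<in>{i. (i,u) \<in> E}. x i u) = (\<Sum>i\<in>{i. (i,u) \<in> E \<and> fcl (i,u)}. x i u) + (\<Sum>i\<in>{i. (i,u) \<in> E \<and> \<not> fcl (i,u)}. x i u)"
    by (rule sum_split_pred)
  thus ?thesis using x_in_sum[of u] label_sum by simp
qed

definition "tgt i u s = (if fcl (i,u) then x i u * (1 - fa s) else (if t0 < s then x i u * gbH s else 0))"

lemma tgt_sum: "(\<Sum>i\<in>{i. (i,u) \<in> E}. tgt i u s) = (1 - ln 2) * (1 - fa s) + (if t0 < s then ln 2 * gbH s else 0)"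
proof -
  have "(\<Sum>i\<in>{i. (i,u) \<in> E}. tgt i u s) = (\<Sum>i\<in>{i. (i,u) \<in> E \<and> fcl (i,u)}. tgt i u s) + (\<Sum>i\<in>{i. (i,u) \<in> E \<and> \<not> fcl (i,u)}. tgt i u s)"
    by (rule sum_split_pred)
  also have "(\<Sum>i\<in>{i. (i,u) \<in> E \<and> fcl (i,u)}. tgt i u s) = (\<Sum>i\<in>{i. (i,u) \<in> E \<and> fcl (i,u)}. x i u) * (1 - fa s)"
    unfolding sum_distrib_right tgt_def by (rule sum.cong) auto
  also have "(\<Sum>i\<in>{i. (i,u) \<in> E \<and> \<not> fcl (i,u)}. tgt i u s) = (\<Sum>i\<in>{i. (i,u) \<in> E \<and> \<not> fcl (i,u)}. x i u) * (if t0 < s then gbH s else 0)"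
    unfolding sum_distrib_right tgt_def by (rule sum.cong) auto
  finally show ?thesis unfolding x_sec_sum label_sum[rule_format] by (simp add: mult.commute)
qed

lemma x_pos: "(i,u) \<in> E \<Longrightarrow> x i u > 0"
proof -
  assume iu: "(i,u) \<in> E"
  have u: "u \<in> nbrs E i" using iu by (simp add: nbrs_def)
  show ?thesis using classes[rule_format, of i] u lam_pos[rule_format, of i] by auto
qed

lemma edge_bound:
  assumes s: "s \<in> {0..1}" and iu: "(i,u) \<in> E"
    and gB: "\<bar>gbH s / (1 - gboth p u (other E i u) s)\<bar> \<le> B"
    and gne: "1 - gboth p u (other E i u) s \<noteq> 0" and B: "B \<ge> 0"
    and Dw: "\<forall>w. \<bar>Fm p w s - fa s\<bar> \<le> Ms"
  shows "\<bar>EI p rG s i u - tgt i u s\<bar> \<le> x i u * ((1 + 2 * B) * Ms)"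
proof -
  have xnn: "x i u \<ge> 0" using x_nonneg by blast
  have Ms: "Ms \<ge> 0" using Dw by (meson abs_ge_zero order_trans)
  show ?thesis
  proof (cases "fcl (i,u)")
    case True
    have e: "EI p rG s i u - tgt i u s = x i u * (fa s - Fm p u s)"
      unfolding EI_fcl[OF s iu True] tgt_def using True by (simp add: algebra_simps)
    have "\<bar>EI p rG s i u - tgt i u s\<bar> = x i u * \<bar>Fm p u s - fa s\<bar>"
      unfolding e abs_mult using xnn by (simp add: abs_minus_commute)
    also have "\<dots> \<le> x i u * Ms" using Dw xnn by (intro mult_left_mono) auto
    also have "\<dots> \<le> x i u * ((1 + 2 * B) * Ms)" using xnn B Ms
      by (intro mult_left_mono) (auto simp: algebra_simps)
    finally show ?thesis .
  next
    case False
    define v where "v = other E i u"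
    define g where "g = 1 - gboth p u v s"
    have gne': "g \<noteq> 0" using gne unfolding g_def v_def .
    show ?thesis
    proof (cases "t0 < s")
      case t: True
      have "EI p rG s i u - tgt i u s = x i u * (gbH s / g) * ((Fm p v s - fa s) - (Fm p u s - fa s))"
        unfolding EI_sec[OF s iu False gne] tgt_def using False t gne'
        by (simp add: v_def g_def field_simps)
      hence "\<bar>EI p rG s i u - tgt i u s\<bar> = x i u * \<bar>gbH s / g\<bar> * \<bar>(Fm p v s - fa s) - (Fm p u s - fa s)\<bar>"
        using xnn by (simp add: abs_mult)
      also have "\<dots> \<le> x i u * B * (Ms + Ms)"
      proof (intro mult_mono mult_left_mono)
        show "\<bar>gbH s / g\<bar> \<le> B" using gB unfolding g_def v_def .
        show "\<bar>(Fm p v s - fa s) - (Fm p u s - fa s)\<bar> \<le> Ms + Ms"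
          using Dw[rule_format, of v] Dw[rule_format, of u] by linarith
      qed (use xnn B Ms in auto)
      also have "\<dots> \<le> x i u * ((1 + 2 * B) * Ms)" using xnn B Ms
        by (simp add: algebra_simps mult_left_mono)
      finally show ?thesis .
    next
      case t: False
      have "EI p rG s i u - tgt i u s = 0"
        unfolding EI_sec[OF s iu False gne] tgt_def using False t by simp
      thus ?thesis using xnn B Ms by simp
    qed
  qed
qed

lemma gen_gronwall:
  assumes T: "T \<le> 1"
    and good: "\<forall>s\<in>{0..T}. (\<forall>\<sigma>. p s \<sigma> \<ge> 0) \<and> (\<forall>u v. gboth p u v s < 1)"
  shows "\<forall>t\<in>{0..T}. \<forall>u. Fm p u t = fa t"
proof (cases "0 \<le> T")
  case False thus ?thesis by simp
next
  case T0: True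
  define \<Phi> where "\<Phi> s = (\<Sum>uv\<in>UNIV. \<bar>gbH s / (1 - gboth p (fst uv) (snd uv) s)\<bar>)" for s
  have sub: "{0..T} \<subseteq> {0..1}" using T by auto
  have \<Phi>c: "continuous_on {0..T} \<Phi>" unfolding \<Phi>_def
  proof (intro continuous_on_sum continuous_on_rabs continuous_on_divide continuous_intros ballI)
    show "continuous_on {0..T} gbH" using gbH_cont sub by (rule continuous_on_subset)
    fix uv :: "'j \<times> 'j"
    show "continuous_on {0..T} (gboth p (fst uv) (snd uv))"
      using gboth_cont[OF gen_law] sub by (rule continuous_on_subset)
    fix s assume "s \<in> {0..T}"
    hence "gboth p (fst uv) (snd uv) s < 1" using good by blast
    thus "1 - gboth p (fst uv) (snd uv) s \<noteq> 0" by simp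
  qed
  obtain m where m: "m \<in> {0..T}" "\<forall>s\<in>{0..T}. \<Phi> s \<le> \<Phi> m"
    using continuous_attains_sup[OF compact_Icc _ \<Phi>c] T0 by auto
  define B where "B = \<Phi> m"
  have B0: "B \<ge> 0" unfolding B_def \<Phi>_def by (rule sum_nonneg) auto
  have gB: "\<bar>gbH s / (1 - gboth p u v s)\<bar> \<le> B" if s: "s \<in> {0..T}" for s u v
  proof -
    have "\<bar>gbH s / (1 - gboth p u v s)\<bar> \<le> \<Phi> s"
      unfolding \<Phi>_def using member_le_sum[of "(u,v)" UNIV "\<lambda>uv. \<bar>gbH s / (1 - gboth p (fst uv) (snd uv) s)\<bar>"]
      by simp
    also have "\<dots> \<le> B" using m s unfolding B_def by blast
    finally show ?thesis .
  qed
  define D where "D u t = Fm p u t - fa t" for u t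
  define M where "M t = (\<Sum>w\<in>UNIV. \<bar>D w t\<bar>)" for t
  have Mc: "continuous_on {0..T} M" unfolding M_def D_def
    by (intro continuous_on_sum continuous_on_rabs continuous_on_diff
        continuous_on_subset[OF Fm_cont[OF gen_law] sub] continuous_on_subset[OF Fm_cont[OF ref_law] sub])
  have DM: "\<bar>D w t\<bar> \<le> M t" for w t
    unfolding M_def using member_le_sum[of w UNIV "\<lambda>w. \<bar>D w t\<bar>"] by simp
  define C where "C = real (card (UNIV :: 'j set)) * (1 + 2 * B)"
  have C0: "C \<ge> 0" unfolding C_def using B0 by simp
  have "\<forall>t\<in>{0..T}. M t = 0"
  proof (rule gronwall0[OF Mc _ C0])
    show "\<forall>t\<in>{0..T}. 0 \<le> M t" unfolding M_def by (auto intro: sum_nonneg)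
    show "\<forall>t\<in>{0..T}. M t \<le> C * integral {0..t} M"
    proof
      fix t assume t: "t \<in> {0..T}"
      have Mi: "M integrable_on {0..t}"
        by (rule integrable_continuous_interval) (use Mc t in \<open>auto elim!: continuous_on_subset\<close>)
      have Du: "\<bar>D u t\<bar> \<le> (1 + 2 * B) * integral {0..t} M" for u
      proof -
        define \<rho>u where "\<rho>u s = (\<Sum>i\<in>{i. (i,u)\<in>E}. EI p rG s i u)" for s
        define \<rho>H where "\<rho>H s = (1 - ln 2) * (1 - fa s) + (if t0 < s then ln 2 * gbH s else 0)" for s
        have h1: "(\<rho>u has_integral (Fm p u t)) {0..t}"
          using Fm_int[OF gen_law, of 0 t u] t T Fm0[OF gen_law] unfolding \<rho>u_def by simp
        have h2: "(\<rho>H has_integral (fa t)) {0..t}"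
          using fa_int2[of 0 t] t T Fm0[OF ref_law] unfolding \<rho>H_def by simp
        have h: "((\<lambda>s. \<rho>u s - \<rho>H s) has_integral D u t) {0..t}"
          unfolding D_def by (rule has_integral_diff[OF h1 h2])
        have "norm (integral {0..t} (\<lambda>s. \<rho>u s - \<rho>H s)) \<le> integral {0..t} (\<lambda>s. (1 + 2 * B) * M s)"
        proof (rule Henstock_Kurzweil_Integration.integral_norm_bound_integral)
          show "(\<lambda>s. \<rho>u s - \<rho>H s) integrable_on {0..t}" using h by blast
          show "(\<lambda>s. (1 + 2 * B) * M s) integrable_on {0..t}"
            using integrable_on_cmult_left[OF Mi, of "1 + 2 * B"] by simp
          fix s assume s: "s \<in> {0..t}"
          hence sT: "s \<in> {0..T}" and s1: "s \<in> {0..1}" using t T by auto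
          have "\<rho>u s - \<rho>H s = (\<Sum>i\<in>{i. (i,u)\<in>E}. EI p rG s i u - tgt i u s)"
          proof -
            have "\<rho>H s = (\<Sum>i\<in>{i. (i,u)\<in>E}. tgt i u s)" unfolding \<rho>H_def by (rule tgt_sum[symmetric])
            thus ?thesis unfolding \<rho>u_def by (simp add: sum_subtractf)
          qed
          hence "norm (\<rho>u s - \<rho>H s) \<le> (\<Sum>i\<in>{i. (i,u)\<in>E}. \<bar>EI p rG s i u - tgt i u s\<bar>)"
            by (simp add: sum_abs)
          also have "\<dots> \<le> (\<Sum>i\<in>{i. (i,u)\<in>E}. x i u * ((1 + 2 * B) * M s))"
          proof (rule sum_mono)
            fix i assume i: "i \<in> {i. (i,u)\<in>E}"
            show "\<bar>EI p rG s i u - tgt i u s\<bar> \<le> x i u * ((1 + 2 * B) * M s)"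
            proof (rule edge_bound[OF s1])
              show "(i,u) \<in> E" using i by simp
              show "\<bar>gbH s / (1 - gboth p u (other E i u) s)\<bar> \<le> B" by (rule gB[OF sT])
              have "gboth p u (other E i u) s < 1" using good sT by blast
              thus "1 - gboth p u (other E i u) s \<noteq> 0" by simp
              show "\<forall>w. \<bar>Fm p w s - fa s\<bar> \<le> M s" using DM unfolding D_def by blast
            qed (rule B0)
          qed
          also have "\<dots> = (1 + 2 * B) * M s" using x_in_sum[of u] by (simp add: sum_distrib_right[symmetric])
          finally show "norm (\<rho>u s - \<rho>H s) \<le> (1 + 2 * B) * M s" .
        qed
        thus ?thesis using integral_unique[OF h] by simp
      qed
      have "M t = (\<Sum>w\<in>UNIV. \<bar>D w t\<bar>)" by (rule M_def)
      also have "\<dots> \<le> (\<Sum>w\<in>(UNIV::'j set). (1 + 2 * B) * integral {0..t} M)"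
        by (rule sum_mono) (rule Du)
      also have "\<dots> = C * integral {0..t} M" unfolding C_def by simp
      finally show "M t \<le> C * integral {0..t} M" .
    qed
  qed
  thus ?thesis using DM unfolding D_def by (metis abs_le_zero_iff eq_iff_diff_eq_0)
qed

end


context Gen begin

definition "good s \<longleftrightarrow> (\<forall>\<sigma>. p s \<sigma> \<ge> 0) \<and> (\<forall>u v. gboth p u v s < 1)"

lemma good_all: "\<forall>s\<in>{0..1}. good s"
proof (rule cont_induct)
  fix t :: real assume t: "t \<in> {0..1}" and below: "\<forall>s\<in>{0..<t}. good s"
  have pos_t: "\<forall>\<sigma>. p t \<sigma> \<ge> 0"
  proof
    fix \<sigma>
    show "p t \<sigma> \<ge> 0"
    proof (cases "t = 0")
      case True thus ?thesis using p0_val[OF gen_law, of \<sigma>] by simp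
    next
      case False
      have "(\<lambda>s. - p s \<sigma>) t \<le> 0"
      proof (rule left_closed[where g = "\<lambda>s. - p s \<sigma>" and T = 1])
        show "continuous_on {0..1} (\<lambda>s. - p s \<sigma>)" by (intro continuous_intros ml_cont[OF gen_law])
        show "\<forall>s\<in>{0..<t}. - p s \<sigma> \<le> 0" using below unfolding good_def by auto
      qed (use t False in auto)
      thus ?thesis by simp
    qed
  qed
  have Feq: "\<forall>u. Fm p u t = fa t"
  proof
    fix u
    show "Fm p u t = fa t"
    proof (cases "t = 0")
      case True thus ?thesis using Fm0[OF gen_law] Fm0[OF ref_law] by simp
    next
      case False
      have eqb: "\<forall>s\<in>{0..<t}. Fm p u s = fa s"
      proof
        fix s assume s: "s \<in> {0..<t}"
        have "\<forall>s'\<in>{0..s}. (\<forall>\<sigma>. p s' \<sigma> \<ge> 0) \<and> (\<forall>u v. gboth p u v s' < 1)"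
          using below s unfolding good_def by auto
        hence "\<forall>t'\<in>{0..s}. \<forall>u. Fm p u t' = fa t'" using s t by (intro gen_gronwall) auto
        thus "Fm p u s = fa s" using s by auto
      qed
      have c: "continuous_on {0..1} (\<lambda>s. Fm p u s - fa s)"
        by (intro continuous_intros Fm_cont[OF gen_law] Fm_cont[OF ref_law])
      have "(\<lambda>s. Fm p u s - fa s) t \<le> 0"
        by (rule left_closed[OF c]) (use t False eqb in auto)
      moreover have "(\<lambda>s. - (Fm p u s - fa s)) t \<le> 0"
        by (rule left_closed[OF continuous_on_minus[OF c]]) (use t False eqb in auto)
      ultimately show ?thesis by simp
    qed
  qed
  have gt: "gboth p u v t < 1" for u v
  proof -
    have "gboth p u v t \<le> Fm p u t" using pos_t by (rule gboth_le)
    also have "\<dots> = fa t" using Feq by blast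
    also have "\<dots> < 1" using fa_lt1 t by blast
    finally show ?thesis .
  qed
  have ex: "\<forall>uv\<in>UNIV. \<exists>e>0. \<forall>s. \<bar>s - t\<bar> < e \<longrightarrow> (s \<in> {0..1} \<longrightarrow> gboth p (fst uv) (snd uv) s < 1)"
  proof
    fix uv :: "'j \<times> 'j"
    obtain e where "e > 0" "\<forall>s\<in>{0..1}. \<bar>s - t\<bar> < e \<longrightarrow> gboth p (fst uv) (snd uv) s < 1"
      using near_cont[OF gboth_cont[OF gen_law] t gt] by blast
    thus "\<exists>e>0. \<forall>s. \<bar>s - t\<bar> < e \<longrightarrow> (s \<in> {0..1} \<longrightarrow> gboth p (fst uv) (snd uv) s < 1)" by blast
  qed
  have "\<exists>e>0. \<forall>uv\<in>UNIV. \<forall>s. \<bar>s - t\<bar> < e \<longrightarrow> (s \<in> {0..1} \<longrightarrow> gboth p (fst uv) (snd uv) s < 1)"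
    by (rule finite_eps) (use ex in auto)
  then obtain e where e: "e > 0"
    "\<forall>uv\<in>UNIV. \<forall>s. \<bar>s - t\<bar> < e \<longrightarrow> (s \<in> {0..1} \<longrightarrow> gboth p (fst uv) (snd uv) s < 1)"
    by blast
  have gnear: "gboth p u v s < 1" if "s \<in> {0..1}" "s < t + e" for s u v
  proof (cases "s < t")
    case True thus ?thesis using below that unfolding good_def by auto
  next
    case False
    hence "\<bar>s - t\<bar> < e" using that by auto
    thus ?thesis using e(2) that by force
  qed
  show "\<exists>e>0. \<forall>s\<in>{0..1}. s < t + e \<longrightarrow> good s"
  proof (intro exI[of _ e] conjI ballI impI)
    fix s assume s: "s \<in> {0..1}" "s < t + e"
    have "\<forall>t'\<in>{0..s}. p t' \<sigma> \<ge> 0" for \<sigma>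
    proof (rule positivity[OF gen_law])
      show "s \<le> 1" using s by auto
      show "\<forall>s'\<in>{0..s}. \<forall>\<sigma> i u. rG s' \<sigma> i u \<ge> 0"
      proof (intro ballI allI)
        fix s' \<sigma> i u assume s': "s' \<in> {0..s}"
        show "rG s' \<sigma> i u \<ge> 0" by (rule rate_nn) (use s s' gnear in auto)
      qed
    qed
    thus "good s" unfolding good_def using s gnear by auto
  qed (rule e(1))
qed

lemma final:
  assumes t: "t \<in> {0..1}" and iu: "(i,u) \<in> E"
  shows "(fcl (i, u) \<longrightarrow> qedge p i u t / x i u = H_q1 pH t / (1 - ln 2)) \<and>
         (\<not> fcl (i, u) \<longrightarrow> qedge p i u t / x i u = H_q2 pH t / ln 2)"
proof -
  have Feq: "\<forall>s\<in>{0..1}. \<forall>w. Fm p w s = fa s"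
    by (rule gen_gronwall[OF order_refl]) (use good_all in \<open>auto simp: good_def\<close>)
  have hq: "((\<lambda>s. EI p rG s i u) has_integral qedge p i u t) {0..t}"
    using edge_int[OF gen_law, of 0 t i u] t iu qedge0[OF gen_law] by simp
  have xp: "x i u > 0" using x_pos[OF iu] .
  have l2: "0 < ln (2::real)" "ln (2::real) < 1" by (rule ln2_bounds)+
  show ?thesis
  proof (intro conjI impI)
    assume f: "fcl (i,u)"
    have h1: "((\<lambda>s. x i u * (1 - fa s)) has_integral qedge p i u t) {0..t}"
      by (rule has_integral_eq[OF _ hq]) (use t Feq in \<open>auto simp: EI_fcl[OF _ iu f]\<close>)
    have h2: "((\<lambda>s. (x i u / (1 - ln 2)) * ((1 - ln 2) * (1 - fa s))) has_integral
                 ((x i u / (1 - ln 2)) * H_q1 pH t)) {0..t}"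
      by (rule has_integral_mult_right[OF q1_int[OF t]])
    have "(\<lambda>s. (x i u / (1 - ln 2)) * ((1 - ln 2) * (1 - fa s))) = (\<lambda>s. x i u * (1 - fa s))"
      using l2 by (auto simp: field_simps)
    hence "qedge p i u t = (x i u / (1 - ln 2)) * H_q1 pH t"
      using h1 h2 has_integral_unique by metis
    thus "qedge p i u t / x i u = H_q1 pH t / (1 - ln 2)" using xp l2 by (simp add: field_simps)
  next
    assume f: "\<not> fcl (i,u)"
    have ev: "EI p rG s i u = (if t0 < s then x i u * gbH s else 0)" if s: "s \<in> {0..1}" for s
    proof -
      have "gboth p u (other E i u) s < 1" using good_all s unfolding good_def by blast
      hence gne: "1 - gboth p u (other E i u) s \<noteq> 0" by simp
      have "Fm p (other E i u) s = Fm p u s" using Feq s by simp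
      thus ?thesis unfolding EI_sec[OF s iu f gne] by simp
    qed
    have h1: "((\<lambda>s. if t0 < s then x i u * gbH s else 0) has_integral qedge p i u t) {0..t}"
      by (rule has_integral_eq[OF _ hq]) (use t ev in auto)
    have h2: "((\<lambda>s. (x i u / ln 2) * (if t0 < s then ln 2 * gbH s else 0)) has_integral
                 ((x i u / ln 2) * H_q2 pH t)) {0..t}"
      by (rule has_integral_mult_right[OF q2_int[OF t]])
    have "(\<lambda>s. (x i u / ln 2) * (if t0 < s then ln 2 * gbH s else 0)) = (\<lambda>s. if t0 < s then x i u * gbH s else 0)"
      using l2 by (auto simp: field_simps)
    hence "qedge p i u t = (x i u / ln 2) * H_q2 pH t"
      using h1 h2 has_integral_unique by metis
    thus "qedge p i u t / x i u = H_q2 pH t / ln 2" using xp l2 by (simp add: field_simps)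
  qed
qed

end


theorem lemma4p10:
  fixes E :: "('i::finite \<times> 'j::finite) set"
    and lam :: "'i \<Rightarrow> real"
    and x :: "'i \<Rightarrow> 'j \<Rightarrow> real"
    and fcl :: "'i \<times> 'j \<Rightarrow> bool"
    and t0 :: real
    and pH :: "real \<Rightarrow> (htype, hoff) mstate \<Rightarrow> real"
    and p :: "real \<Rightarrow> ('i, 'j) mstate \<Rightarrow> real"
  assumes lam_pos: "\<forall>i. lam i > 0"
    and x_nonneg: "\<forall>i j. x i j \<ge> 0"
    and x_off: "\<forall>i j. (i, j) \<notin> E \<longrightarrow> x i j = 0"
    and x_sum: "\<forall>j. (\<Sum>i\<in>UNIV. x i j) = 1"
    and classes: "\<forall>i. (card (nbrs E i) = 1 \<and> (\<forall>j\<in>nbrs E i. x i j = lam i))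
                     \<or> (card (nbrs E i) = 2 \<and> (\<forall>j\<in>nbrs E i. x i j = lam i / 2))"
    and label_first: "\<forall>i j. (i, j) \<in> E \<and> card (nbrs E i) = 1 \<longrightarrow> fcl (i, j)"
    and label_sum: "\<forall>j. (\<Sum>i\<in>{i. (i, j) \<in> E \<and> fcl (i, j)}. x i j) = 1 - ln 2"
    and ref_law: "matched_law H_E (res_rate H_E H_lam t0) pH"
    and gen_law: "matched_law E (gen_rate E lam fcl t0 (\<lambda>s. 1 - H_g pH s) p) p"
  shows "\<forall>t\<in>{0..1}. \<forall>i u. (i, u) \<in> E \<longrightarrow>
           (fcl (i, u) \<longrightarrow> qedge p i u t / x i u = H_q1 pH t / (1 - ln 2)) \<and>
           (\<not> fcl (i, u) \<longrightarrow> qedge p i u t / x i u = H_q2 pH t / ln 2)"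
proof -
  interpret Gen t0 pH E lam x fcl p
    by unfold_locales (rule assms)+
  show ?thesis using final by blast
qed

end
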